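(* Let $n\ge1$. Then: (i) $|LP_n|=\frac{1}{n+1}\binom{2n}{n}$. (ii) For $1\le k\le n$, the number of $\sigma\in LP_n$ with exposure number $\operatorname{ex}(\sigma)=k$ equals $\binom{2n-k}{n}\frac{k}{2n-k}$. (iii) For $0\le \ell\le n-1$, the number of $\sigma\in LP_n$ with interaction number $\operatorname{int}(\sigma)=\ell$ equals $\frac{1}{n}\binom{n}{\ell+1}\binom{n}{\ell}$.
   Context: For a positive integer $m$, a link pattern of $m$ strands is a non-crossing perfect matching of $\{0,1,\dots,2m-1\}$, i.e. there are no two pairs $\{a,b\},\{c,d\}$ with $a<c<b<d$. Let $LP_m$ be the set of link patterns of $m$ strands. For $i\in\{0,\dots,2m-1\}$, with indices taken mod $2m$, the map $e_i:LP_m\to LP_m$ is defined as follows. If $\sigma$ pairs $i$ with $i+1$, then $e_i(\sigma)=\sigma$. Otherwise, if $\sigma$ pairs $i$ with $a$ and $i+1$ with $b$, then $e_i(\sigma)$ pairs $i$ with $i+1$ and $a$ with $b$, keeping all other pairs. Exposure number: place the points of $\sigma\in LP_m$ on a line in the order $1,2,\dots,2m-1,0$. A pair $\{a,b\}$, with $a$ before $b$, is an outermost link if there is no other pair $\{c,d\}$ with $c$ before $a$ and $b$ before $d$. The exposure number $\operatorname{ex}(\sigma)$ is the number of outermost links. For $\pi\in LP_{m-1}$, $\pi^+\in LP_m$ consists of the pair $\{2m-1,0\}$ together with the pairs $\{\varphi(a),\varphi(b)\}$ for each pair $\{a,b\}$ of $\pi$, where $\varphi(j)=j$ for $1\le j\le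 2m-3$ and $\varphi(0)=2m-2$. For every $\sigma\in LP_m$ with $m\ge2$, there is a unique parent $p(\sigma)\in LP_{m-1}$ with $e_{2m-1}(\sigma)=p(\sigma)^+$. Interaction number: for $\sigma\in LP_n$, set $\sigma_n=\sigma$ and $\sigma_{j-1}=p(\sigma_j)$ for $j=n,n-1,\dots,2$. The interaction number $\operatorname{int}(\sigma)$ is the number of indices $j\in\{2,\dots,n\}$ such that $\sigma_j\neq(\sigma_{j-1})^+$, i.e. such that $\sigma_j$ does not pair $2j-1$ with $0$. The unique element of $LP_1$ has interaction number $0$. *)

theory Defs
  imports Complex_Main
begin

type_synonym linkpat = "nat set set"

definition LP :: "nat \<Rightarrow> linkpat set" where
  "LP m = {\<sigma>.
     (\<forall>p\<in>\<sigma>. \<exists>a b. p = {a, b} \<and> a \<noteq> b \<and> a < 2*m \<and> b < 2*m) \<and>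
     (\<forall>x<2*m. \<exists>!p. p \<in> \<sigma> \<and> x \<in> p) \<and>
     \<not> (\<exists>a b c d. {a, b} \<in> \<sigma> \<and> {c, d} \<in> \<sigma> \<and> a < c \<and> c < b \<and> b < d)}"

definition partner :: "linkpat \<Rightarrow> nat \<Rightarrow> nat" where
  "partner \<sigma> x = (THE y. {x, y} \<in> \<sigma> \<and> y \<noteq> x)"

definition e_op :: "nat \<Rightarrow> nat \<Rightarrow> linkpat \<Rightarrow> linkpat" where
  "e_op m i \<sigma> =
     (let j = (i + 1) mod (2*m) in
      if {i, j} \<in> \<sigma> then \<sigma>
      else (\<sigma> - {{i, partner \<sigma> i}, {j, partner \<sigma> j}})
             \<union> {{i, j}, {partner \<sigma> i, partner \<sigma> j}})"

text \<open>Exposure number: points placed in the order 1,2,...,2m-1,0.\<close>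
definition expos :: "nat \<Rightarrow> nat \<Rightarrow> nat" where
  "expos m x = (if x = 0 then 2*m else x)"

definition encloses :: "nat \<Rightarrow> nat set \<Rightarrow> nat set \<Rightarrow> bool" where
  "encloses m q p \<longleftrightarrow>
     Min (expos m ` q) < Min (expos m ` p) \<and> Max (expos m ` p) < Max (expos m ` q)"

definition ex :: "nat \<Rightarrow> linkpat \<Rightarrow> nat" where
  "ex m \<sigma> = card {p \<in> \<sigma>. \<not> (\<exists>q\<in>\<sigma>. q \<noteq> p \<and> encloses m q p)}"

definition phi :: "nat \<Rightarrow> nat \<Rightarrow> nat" where
  "phi m j = (if j = 0 then 2*m - 2 else j)"

definition plus :: "nat \<Rightarrow> linkpat \<Rightarrow> linkpat" where
  "plus m \<pi> = insert {2*m - 1, 0} ((\<lambda>p. phi m ` p) ` \<pi>)"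

definition parent :: "nat \<Rightarrow> linkpat \<Rightarrow> linkpat" where
  "parent m \<sigma> = (THE \<pi>. \<pi> \<in> LP (m - 1) \<and> e_op m (2*m - 1) \<sigma> = plus m \<pi>)"

text \<open>anc n k \<sigma> is \<sigma>_{n-k} in the chain \<sigma>_n = \<sigma>, \<sigma>_{j-1} = p(\<sigma>_j).\<close>
fun anc :: "nat \<Rightarrow> nat \<Rightarrow> linkpat \<Rightarrow> linkpat" where
  "anc n 0 \<sigma> = \<sigma>"
| "anc n (Suc k) \<sigma> = parent (n - k) (anc n k \<sigma>)"

definition sigma_at :: "nat \<Rightarrow> linkpat \<Rightarrow> nat \<Rightarrow> linkpat" where
  "sigma_at n \<sigma> j = anc n (n - j) \<sigma>"

definition interaction :: "nat \<Rightarrow> linkpat \<Rightarrow> nat" where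
  "interaction n \<sigma> =
     card {j \<in> {2..n}. sigma_at n \<sigma> j \<noteq> plus j (sigma_at n \<sigma> (j - 1))}"

end

theory Submission
  imports Defs
begin


lemma absorb_real: "real (l+1) * real (a choose (l+1)) = (real a - real l) * real (a choose l)"
proof -
  have h1: "Suc l * (Suc a choose Suc l) = Suc a * (a choose l)" by (rule Suc_times_binomial)
  have h2: "Suc a choose Suc l = (a choose l) + (a choose Suc l)" by simp
  have "real (Suc l) * (real (a choose l) + real (a choose Suc l)) = real (Suc a) * real (a choose l)"
    using h1 h2 by (metis of_nat_add of_nat_mult)
  thus ?thesis by (simp add: algebra_simps)
qed

lemma absorb_real2:
  assumes "n \<ge> 1"
  shows "real l * real ((n-1) choose l) = (real n - real l) * real (if l = 0 then 0 else (n-1) choose (l-1))"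
proof (cases l)
  case 0 then show ?thesis by simp
next
  case (Suc l')
  have "real (l'+1) * real ((n-1) choose (l'+1)) = (real (n-1) - real l') * real ((n-1) choose l')"
    by (rule absorb_real)
  with Suc assms show ?thesis by (simp add: of_nat_diff algebra_simps)
qed

definition Fc :: "nat \<Rightarrow> nat \<Rightarrow> nat \<Rightarrow> real" where
  "Fc n k l = (if k = 0 \<or> n < k then 0 else if k = n then (if l = 0 then 1 else 0)
     else if l = 0 then 0 else real k / real (n-k) * real ((n-k) choose l) * real ((n-1) choose (l-1)))"

lemma Fc_gen:
  assumes "k < n"
  shows "Fc n k l = real k / real (n-k) * real ((n-k) choose l) * real (if l = 0 then 0 else (n-1) choose (l-1))"
  using assms unfolding Fc_def by auto

lemma binom_split:
  assumes "n \<ge> 1"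
  shows "real (n choose l) = real (if l = 0 then 0 else (n-1) choose (l-1)) + real ((n-1) choose l)"
proof (cases l)
  case 0 then show ?thesis by simp
next
  case (Suc l')
  obtain n' where n: "n = Suc n'" using assms by (cases n) auto
  show ?thesis using Suc n by simp
qed

lemma hlp1: "(c::real) > 0 \<Longrightarrow> j / (c) * (x + y) * (u + v) - (j - 1) / (c) * (x + y) * v
       = (x + y) * (j * u + v) / (c)"
  by (simp add: divide_simps) (simp add: algebra_simps)
lemma hlp2: "(c::real) > 0 \<Longrightarrow> j / c * x * u + (j + 1) / c * y * (u + v) - j / c * y * v
       = (j * x * u + (j + 1) * y * u + y * v) / c"
  by (simp add: divide_simps) (simp add: algebra_simps)
lemma hlp3: "(c::real) > 0 \<Longrightarrow> (d::real) > 0 \<Longrightarrow> d * P = c * Q \<Longrightarrow> P / c = Q / d"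
  by (simp add: divide_simps) (simp add: algebra_simps)

lemma hlp4: "(c::real) \<noteq> 0 \<Longrightarrow> N * (A * c) * (p / c * z + q / c * W) = A * (N * p * z + q * (N * W))"
  by (simp add: field_simps)

lemma Fc_identity:
  assumes "n \<ge> 1" "j \<ge> 1"
  shows "Fc (n+1) j (l+1) - Fc n (j-1) (l+1) = Fc n j l + Fc (n+1) (j+1) (l+1) - Fc n j (l+1)"
proof -
  consider "j > n+1" | "j = n+1" | "j = n" | "j < n" by linarith
  then show ?thesis
  proof cases
    case 1 then show ?thesis by (simp add: Fc_def)
  next
    case 2 then show ?thesis by (simp add: Fc_def)
  next
    case 3
    show ?thesis
    proof (cases "n = 1")
      case True
      with 3 show ?thesis by (cases l) (simp_all add: Fc_def)
    next
      case False
      with 3 assms show ?thesis by (cases l) (auto simp add: Fc_def of_nat_diff)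
    qed
  next
    case 4
    define a where "a = n - j"
    have a1: "a \<ge> 1" using 4 a_def by simp
    have na: "n = a + j" using 4 a_def by simp
    define x where "x = real (a choose l)"
    define y where "y = real (a choose (l+1))"
    define u where "u = real (if l = 0 then 0 else (n-1) choose (l-1))"
    define v where "v = real ((n-1) choose l)"
    have e1: "Fc (n+1) j (l+1) = real j / (real a + 1) * (x + y) * (u + v)"
    proof -
      have "Fc (n+1) j (l+1) = real j / real (n+1-j) * real ((n+1-j) choose (l+1)) * real (n choose l)"
        using Fc_gen[of j "n+1" "l+1"] 4 by simp
      moreover have "n+1-j = Suc a" using na by simp
      moreover have "real (n choose l) = u + v" using binom_split[OF assms(1)] u_def v_def by simp
      moreover have "real n - real j = real a" using na by simp
      ultimately show ?thesis by (simp add: x_def y_def)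
    qed
    have e2: "Fc n (j-1) (l+1) = (real j - 1) / (real a + 1) * (x + y) * v"
    proof (cases "j = 1")
      case True then show ?thesis by (simp add: Fc_def)
    next
      case False
      have "Fc n (j-1) (l+1) = real (j-1) / real (n-(j-1)) * real ((n-(j-1)) choose (l+1)) * real ((n-1) choose l)"
        using Fc_gen[of "j-1" n "l+1"] 4 by simp
      moreover have "n-(j-1) = Suc a" using na False assms by simp
      moreover have "real n - real j = real a" using na by simp
      ultimately show ?thesis using False assms by (simp add: x_def y_def v_def of_nat_diff)
    qed
    have e3: "Fc n j l = real j / real a * x * u"
      using Fc_gen[of j n l] 4 by (simp add: a_def x_def u_def)
    have e4: "Fc (n+1) (j+1) (l+1) = (real j + 1) / real a * y * (u + v)"
    proof -
      have "Fc (n+1) (j+1) (l+1) = real (j+1) / real (n+1-(j+1)) * real ((n+1-(j+1)) choose (l+1)) * real (n choose l)"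
        using Fc_gen[of "j+1" "n+1" "l+1"] 4 by simp
      moreover have "n+1-(j+1) = a" using na by simp
      moreover have "real (n choose l) = u + v" using binom_split[OF assms(1)] u_def v_def by simp
      ultimately show ?thesis by (simp add: y_def)
    qed
    have e5: "Fc n j (l+1) = real j / real a * y * v"
      using Fc_gen[of j n "l+1"] 4 by (simp add: a_def y_def v_def)
    have r1: "real (l+1) * y = (real a - real l) * x" unfolding x_def y_def by (rule absorb_real)
    have r2: "real l * v = (real n - real l) * u" unfolding u_def v_def using absorb_real2[OF assms(1)] by simp
    have an: "real n = real a + real j" using na by simp
    have apos: "real a > 0" using a1 by simp
    have key: "real a * (x + y) * (real j * u + v) = (real a + 1) * (real j * x * u + (real j + 1) * y * u + y * v)"
    proof -
      define G where "G = real a * (x + y) * (real j * u + v) - (real a + 1) * (real j * x * u + (real j + 1) * y * u + y * v)"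
      define R1 where "R1 = real (l+1) * y - (real a - real l) * x"
      define R2 where "R2 = real l * v - (real a + real j - real l) * u"
      have "(real l + 1) * G = - (v + (real a + real j + 1) * u) * R1 + x * (real a + 1) * R2"
        unfolding G_def R1_def R2_def by (simp add: algebra_simps)
      moreover have "R1 = 0" using r1 R1_def by simp
      moreover have "R2 = 0" using r2 R2_def an by simp
      ultimately have "(real l + 1) * G = 0" by simp
      hence "G = 0" by (simp add: add_nonneg_eq_0_iff)
      thus ?thesis unfolding G_def by simp
    qed
    have s1: "real j / (real a + 1) * (x + y) * (u + v) - (real j - 1) / (real a + 1) * (x + y) * v
       = (x + y) * (real j * u + v) / (real a + 1)"
      using hlp1[of "real a + 1"] apos by simp
    have s2: "real j / real a * x * u + (real j + 1) / real a * y * (u + v) - real j / real a * y * v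
       = (real j * x * u + (real j + 1) * y * u + y * v) / real a"
      using hlp2[of "real a"] apos by simp
    have s3: "(x + y) * (real j * u + v) / (real a + 1) = (real j * x * u + (real j + 1) * y * u + y * v) / real a"
      using hlp3[of "real a + 1" "real a"] apos key by simp
    show ?thesis
      unfolding e1 e2 e3 e4 e5 using s1 s2 s3 by simp
  qed
qed

lemma Fc_zero: "k = 0 \<or> n < k \<Longrightarrow> Fc n k l = 0"
  unfolding Fc_def by auto

lemma Fc_tail:
  assumes "n \<ge> 1" "1 \<le> j" "j \<le> n+1"
  shows "(\<Sum>k=j..n. Fc n k l) = Fc (n+1) j (l+1) - Fc n (j-1) (l+1)"
  using assms
proof (induction "n+1-j" arbitrary: j)
  case 0
  then have "j = n+1" by simp
  then show ?case by (simp add: Fc_def)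
next
  case (Suc d)
  then have jn: "j \<le> n" by simp
  have IH: "(\<Sum>k=j+1..n. Fc n k l) = Fc (n+1) (j+1) (l+1) - Fc n j (l+1)"
    using Suc.hyps(1)[of "j+1"] Suc.hyps(2) Suc.prems by simp
  have "(\<Sum>k=j..n. Fc n k l) = Fc n j l + (\<Sum>k=j+1..n. Fc n k l)"
    using jn by (simp add: sum.atLeast_Suc_atMost)
  also have "\<dots> = Fc (n+1) j (l+1) - Fc n (j-1) (l+1)"
    using IH Fc_identity[OF Suc.prems(1) Suc.prems(2), of l] by simp
  finally show ?case .
qed

lemma Fc_narayana:
  assumes "n \<ge> 1"
  shows "Fc (n+1) 1 (l+1) = (1 / real n) * real (n choose (l + 1)) * real (n choose l)"
  using Fc_gen[of 1 "n+1" "l+1"] assms by simp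

definition Bc :: "nat \<Rightarrow> nat \<Rightarrow> real" where
  "Bc n k = (if k = 0 \<or> n < k then 0 else real ((2*n - k) choose n) * real k / real (2*n - k))"

lemma Bc_identity:
  assumes "n \<ge> 1" "j \<ge> 1"
  shows "Bc (n+1) j = Bc n (j-1) + Bc (n+1) (j+1)"
proof -
  consider "j > n+1" | "j = n+1" | "j \<le> n" by linarith
  then show ?thesis
  proof cases
    case 1 then show ?thesis by (simp add: Bc_def)
  next
    case 2
    have "Bc (n+1) (n+1) = 1" unfolding Bc_def by simp
    moreover have "Bc n n = 1" unfolding Bc_def using assms by (simp add: mult_2)
    ultimately show ?thesis using 2 by (simp add: Bc_def)
  next
    case 3
    define a where "a = 2*n+2-j"
    have a2: "a \<ge> n + 2" using 3 a_def by simp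
    define z where "z = real ((a-1) choose n)"
    define Ca where "Ca = real (a choose (n+1))"
    define W where "W = real ((a-1) choose (n+1))"
    have e1: "Bc (n+1) j = real j / real a * Ca"
      unfolding Bc_def Ca_def a_def using 3 assms by (simp add: algebra_simps)
    have e2: "Bc (n+1) (j+1) = (real j + 1) / (real a - 1) * W"
    proof -
      have "2 * (n+1) - (j+1) = a - 1" using a_def 3 by simp
      then show ?thesis unfolding Bc_def W_def using 3 a2 by (simp add: of_nat_diff algebra_simps)
    qed
    have e3: "Bc n (j-1) = (real j - 1) / (real a - 1) * z"
    proof (cases "j = 1")
      case True then show ?thesis by (simp add: Bc_def)
    next
      case False
      have "2 * n - (j-1) = a - 1" using a_def 3 assms False by simp
      then show ?thesis unfolding Bc_def z_def using 3 a2 False assms by (simp add: of_nat_diff algebra_simps)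
    qed
    have r1: "real (n+1) * Ca = real a * z"
    proof -
      have "Suc n * (Suc (a-1) choose Suc n) = Suc (a-1) * ((a-1) choose n)" by (rule Suc_times_binomial)
      moreover have "Suc (a-1) = a" using a2 by simp
      ultimately have "(n+1) * (a choose (n+1)) = a * ((a-1) choose n)" by simp
      then show ?thesis unfolding Ca_def z_def by (metis of_nat_mult)
    qed
    have r2: "real (n+1) * W = (real a - 1 - real n) * z"
      using absorb_real[of n "a-1"] a2 unfolding W_def z_def by (simp add: of_nat_diff)
    have aj: "real a = 2 * real n + 2 - real j" using a_def 3 by simp
    have jj: "real j = 2 * real n + 2 - real a" using aj by simp
    have am: "real a - 1 > 0" using a2 by simp
    have ap: "real a > 0" using a2 by simp
    have np: "real n + 1 > 0" by simp
    have "real (n+1) * (real a * (real a - 1)) * (real j / real a * Ca)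
        = real (n+1) * (real a * (real a - 1)) * ((real j - 1) / (real a - 1) * z + (real j + 1) / (real a - 1) * W)"
    proof -
      have "real (n+1) * (real a * (real a - 1)) * (real j / real a * Ca) = real j * (real a - 1) * (real (n+1) * Ca)"
        using ap by (simp add: field_simps)
      also have "\<dots> = real j * (real a - 1) * real a * z" using r1 by simp
      also have "\<dots> = real a * (real (n+1) * (real j - 1) * z + (real j + 1) * ((real a - 1 - real n) * z))"
        using aj by (simp add: jj algebra_simps)
      also have "\<dots> = real a * (real (n+1) * (real j - 1) * z + (real j + 1) * (real (n+1) * W))"
        using r2 by simp
      also have "\<dots> = real (n+1) * (real a * (real a - 1)) * ((real j - 1) / (real a - 1) * z + (real j + 1) / (real a - 1) * W)"
        using hlp4[of "real a - 1" "real (n+1)" "real a" "real j - 1" z "real j + 1" W] am by simp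
      finally show ?thesis .
    qed
    then have "real j / real a * Ca = (real j - 1) / (real a - 1) * z + (real j + 1) / (real a - 1) * W"
      using am ap by simp
    then show ?thesis using e1 e2 e3 by simp
  qed
qed

lemma Bc_tail:
  assumes "n \<ge> 1" "1 \<le> j" "j \<le> n+1"
  shows "(\<Sum>k=j..n. Bc n k) = Bc (n+1) j - Bc n (j-1)"
  using assms
proof (induction "n+1-j" arbitrary: j)
  case 0
  then have "j = n+1" by simp
  moreover have "Bc (n+1) (n+1) = 1" unfolding Bc_def by simp
  moreover have "Bc n n = 1" unfolding Bc_def using 0 by (simp add: mult_2)
  ultimately show ?case by simp
next
  case (Suc d)
  then have jn: "j \<le> n" by simp
  have IH: "(\<Sum>k=j+1..n. Bc n k) = Bc (n+1) (j+1) - Bc n j"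
    using Suc.hyps(1)[of "j+1"] Suc.hyps(2) Suc.prems by simp
  have "(\<Sum>k=j..n. Bc n k) = Bc n j + (\<Sum>k=j+1..n. Bc n k)"
    using jn by (simp add: sum.atLeast_Suc_atMost)
  also have "\<dots> = Bc (n+1) j - Bc n (j-1)"
    using IH Bc_identity[OF Suc.prems(1) Suc.prems(2)] by simp
  finally show ?case .
qed

lemma Bc_catalan:
  "Bc (n+1) 1 = (1 / (real n + 1)) * real ((2*n) choose n)"
proof -
  have "Suc n * (Suc (2*n) choose Suc n) = Suc (2*n) * ((2*n) choose n)" by (rule Suc_times_binomial)
  then have h: "real (n+1) * real ((2*n+1) choose (n+1)) = real (2*n+1) * real ((2*n) choose n)"
    by (metis Suc_eq_plus1 of_nat_mult)
  have "Bc (n+1) 1 = real ((2*n+1) choose (n+1)) / real (2*n+1)"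
    unfolding Bc_def by (simp del: binomial_Suc_Suc add: algebra_simps)
  also have "\<dots> = real ((2*n) choose n) / real (n+1)"
    by (rule hlp3) (use h in auto)
  finally show ?thesis by simp
qed


definition wfM :: "nat \<Rightarrow> (nat \<times> nat) set \<Rightarrow> bool" where
"wfM m R \<longleftrightarrow> (\<forall>a b. (a,b)\<in>R \<longrightarrow> 1 \<le> a \<and> a < b \<and> b \<le> 2*m) \<and>
  (\<forall>x. 1 \<le> x \<longrightarrow> x \<le> 2*m \<longrightarrow> (\<exists>y. (x,y)\<in>R \<or> (y,x)\<in>R)) \<and>
  (\<forall>a b c d. (a,b)\<in>R \<longrightarrow> (c,d)\<in>R \<longrightarrow> (a=c \<or> a=d \<or> b=c \<or> b=d) \<longrightarrow> a=c \<and> b=d) \<and>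
  (\<forall>a b c d. (a,b)\<in>R \<longrightarrow> (c,d)\<in>R \<longrightarrow> \<not>(a<c \<and> c<b \<and> b<d))"

lemma wfM_range: "wfM m R \<Longrightarrow> (a,b)\<in>R \<Longrightarrow> 1 \<le> a \<and> a < b \<and> b \<le> 2*m"
  unfolding wfM_def by blast
lemma wfM_cover: "wfM m R \<Longrightarrow> 1 \<le> x \<Longrightarrow> x \<le> 2*m \<Longrightarrow> \<exists>y. (x,y)\<in>R \<or> (y,x)\<in>R"
  unfolding wfM_def by blast
lemma wfM_disj: "wfM m R \<Longrightarrow> (a,b)\<in>R \<Longrightarrow> (c,d)\<in>R \<Longrightarrow> a=c \<or> a=d \<or> b=c \<or> b=d \<Longrightarrow> a=c \<and> b=d"
  unfolding wfM_def by blast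
lemma wfM_nc: "wfM m R \<Longrightarrow> (a,b)\<in>R \<Longrightarrow> (c,d)\<in>R \<Longrightarrow> a<c \<Longrightarrow> c<b \<Longrightarrow> b<d \<Longrightarrow> False"
  unfolding wfM_def by blast

lemma wfM_finite: "wfM m R \<Longrightarrow> finite R"
proof -
  assume w: "wfM m R"
  have "R \<subseteq> {0..2*m} \<times> {0..2*m}"
    using wfM_range[OF w] by fastforce
  then show ?thesis by (rule finite_subset) simp
qed

lemma wfM_I:
  assumes "\<And>a b. (a,b)\<in>R \<Longrightarrow> 1 \<le> a \<and> a < b \<and> b \<le> 2*m"
    and "\<And>x. 1 \<le> x \<Longrightarrow> x \<le> 2*m \<Longrightarrow> \<exists>y. (x,y)\<in>R \<or> (y,x)\<in>R"
    and "\<And>a b c d. (a,b)\<in>R \<Longrightarrow> (c,d)\<in>R \<Longrightarrow> a=c \<or> a=d \<or> b=c \<or> b=d \<Longrightarrow> a=c \<and> b=d"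
    and "\<And>a b c d. (a,b)\<in>R \<Longrightarrow> (c,d)\<in>R \<Longrightarrow> a<c \<Longrightarrow> c<b \<Longrightarrow> b<d \<Longrightarrow> False"
  shows "wfM m R"
  unfolding wfM_def using assms by blast

definition outer :: "(nat \<times> nat) set \<Rightarrow> (nat \<times> nat) set" where
  "outer R = {p\<in>R. \<not>(\<exists>c d. (c,d)\<in>R \<and> c < fst p \<and> snd p < d)}"

definition exM :: "(nat \<times> nat) set \<Rightarrow> nat" where
  "exM R = card (outer R)"

definition rk :: "(nat \<times> nat) set \<Rightarrow> nat \<Rightarrow> nat" where
  "rk R b = card {p\<in>outer R. snd p < b}"

definition plusM :: "nat \<Rightarrow> (nat \<times> nat) set \<Rightarrow> (nat \<times> nat) set" where
  "plusM m R = insert (2*m+1, 2*m+2) R"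

definition parentM :: "nat \<Rightarrow> (nat \<times> nat) set \<Rightarrow> (nat \<times> nat) set" where
  "parentM m S = (if (2*m+1, 2*m+2) \<in> S then S - {(2*m+1, 2*m+2)} else
     (let a = (THE a. (a, 2*m+1) \<in> S); b = (THE b. (b, 2*m+2) \<in> S) in
       (S - {(a, 2*m+1), (b, 2*m+2)}) \<union> {(b, a)}))"

lemma outer_finite: "wfM m R \<Longrightarrow> finite (outer R)"
  unfolding outer_def using wfM_finite by auto

lemma last_pairs:
  assumes w: "wfM (Suc m) S" and np: "(2*m+1, 2*m+2) \<notin> S"
  shows "\<exists>a b. (a, 2*m+1) \<in> S \<and> (b, 2*m+2) \<in> S \<and> b < a \<and> a \<le> 2*m \<and> 1 \<le> b"
proof -
  obtain y where y: "(2*m+1, y) \<in> S \<or> (y, 2*m+1) \<in> S" using wfM_cover[OF w, of "2*m+1"] by auto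
  have "(2*m+1, y) \<notin> S"
  proof
    assume "(2*m+1, y) \<in> S"
    with wfM_range[OF w this] have "y = 2*m+2" by simp
    with np \<open>(2*m+1, y) \<in> S\<close> show False by simp
  qed
  with y have a: "(y, 2*m+1) \<in> S" by simp
  obtain z where z: "(2*m+2, z) \<in> S \<or> (z, 2*m+2) \<in> S" using wfM_cover[OF w, of "2*m+2"] by auto
  have "(2*m+2, z) \<notin> S"
  proof
    assume "(2*m+2, z) \<in> S"
    with wfM_range[OF w this] have "2*m+2 < z" "z \<le> 2*m+2" by auto
    then show False by simp
  qed
  with z have b: "(z, 2*m+2) \<in> S" by simp
  have "z \<noteq> y" using wfM_disj[OF w a b] by auto
  moreover have "\<not> y < z"
  proof
    assume yz: "y < z"
    have "z \<noteq> 2*m+1" using np b by auto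
    then have "z < 2*m+1" using wfM_range[OF w b] by simp
    then show False using wfM_nc[OF w a b] yz by simp
  qed
  ultimately have "z < y" by simp
  then show ?thesis using a b wfM_range[OF w a] wfM_range[OF w b] by (intro exI[of _ y] exI[of _ z]) auto
qed

lemma parentM_eq:
  assumes w: "wfM (Suc m) S" and np: "(2*m+1, 2*m+2) \<notin> S"
    and a: "(a, 2*m+1) \<in> S" and b: "(b, 2*m+2) \<in> S"
  shows "parentM m S = (S - {(a, 2*m+1), (b, 2*m+2)}) \<union> {(b, a)}"
proof -
  have ta: "(THE a. (a, 2*m+1) \<in> S) = a"
  proof (rule the_equality)
    show "(a, 2*m+1) \<in> S" using a .
    fix x assume "(x, 2*m+1) \<in> S" then show "x = a" using wfM_disj[OF w _ a, of x "2*m+1"] by simp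
  qed
  have tb: "(THE b. (b, 2*m+2) \<in> S) = b"
  proof (rule the_equality)
    show "(b, 2*m+2) \<in> S" using b .
    fix x assume "(x, 2*m+2) \<in> S" then show "x = b" using wfM_disj[OF w _ b, of x "2*m+2"] by simp
  qed
  show ?thesis unfolding parentM_def using np ta tb by (simp add: Let_def)
qed

lemma parentM_in:
  assumes w: "wfM (Suc m) S" and p: "(2*m+1, 2*m+2) \<in> S"
  shows "parentM m S = S - {(2*m+1, 2*m+2)}"
  unfolding parentM_def using p by simp

lemma M1: assumes w: "wfM (Suc m) S" shows "wfM m (parentM m S)"
proof (cases "(2*m+1, 2*m+2) \<in> S")
  case True
  have pe: "parentM m S = S - {(2*m+1, 2*m+2)}" using parentM_in[OF w True] .
  show ?thesis unfolding pe
  proof (rule wfM_I)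
    fix x y assume xy: "(x,y) \<in> S - {(2*m+1, 2*m+2)}"
    then have r: "1 \<le> x \<and> x < y \<and> y \<le> 2*Suc m" using wfM_range[OF w] by blast
    have "y \<noteq> 2*m+1 \<and> y \<noteq> 2*m+2" using wfM_disj[OF w True, of x y] xy by auto
    then show "1 \<le> x \<and> x < y \<and> y \<le> 2*m" using r by auto
  next
    fix x assume "1 \<le> x" "x \<le> 2*m"
    then obtain y where y: "(x,y)\<in>S \<or> (y,x)\<in>S" using wfM_cover[OF w, of x] by auto
    then show "\<exists>y. (x, y) \<in> S - {(2 * m + 1, 2 * m + 2)} \<or> (y, x) \<in> S - {(2 * m + 1, 2 * m + 2)}"
      using \<open>x \<le> 2*m\<close> by auto
  next
    fix a b c d assume "(a,b) \<in> S - {(2*m+1, 2*m+2)}" "(c,d) \<in> S - {(2*m+1, 2*m+2)}" "a = c \<or> a = d \<or> b = c \<or> b = d"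
    then show "a = c \<and> b = d" using wfM_disj[OF w] by blast
  next
    fix a b c d assume "(a,b) \<in> S - {(2*m+1, 2*m+2)}" "(c,d) \<in> S - {(2*m+1, 2*m+2)}" "a < c" "c < b" "b < d"
    then show False using wfM_nc[OF w] by blast
  qed
next
  case False
  obtain a b where a: "(a, 2*m+1) \<in> S" and b: "(b, 2*m+2) \<in> S" and ba: "b < a" and a2: "a \<le> 2*m" and b1: "1 \<le> b"
    using last_pairs[OF w False] by blast
  have pe: "parentM m S = (S - {(a, 2*m+1), (b, 2*m+2)}) \<union> {(b, a)}" using parentM_eq[OF w False a b] .
  let ?R = "(S - {(a, 2*m+1), (b, 2*m+2)}) \<union> {(b, a)}"
  have old: "(x,y) \<in> S" "y \<le> 2*m" "x \<noteq> a" "x \<noteq> b" "y \<noteq> a" "y \<noteq> b"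
    if "(x,y) \<in> S - {(a, 2*m+1), (b, 2*m+2)}" for x y
  proof -
    show "(x,y) \<in> S" using that by simp
    have r: "y \<le> 2*m+2" using wfM_range[OF w, of x y] that by simp
    have "y \<noteq> 2*m+1" using wfM_disj[OF w a, of x y] that by auto
    moreover have "y \<noteq> 2*m+2" using wfM_disj[OF w b, of x y] that by auto
    ultimately show "y \<le> 2*m" using r by simp
    show "x \<noteq> a" "y \<noteq> a" using wfM_disj[OF w a, of x y] that by auto
    show "x \<noteq> b" "y \<noteq> b" using wfM_disj[OF w b, of x y] that by auto
  qed
  show ?thesis unfolding pe
  proof (rule wfM_I)
    fix x y assume xy: "(x,y) \<in> ?R"
    show "1 \<le> x \<and> x < y \<and> y \<le> 2*m"
    proof (cases "(x,y) = (b,a)")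
      case True then show ?thesis using ba a2 b1 by simp
    next
      case False
      then have o: "(x,y) \<in> S - {(a, 2*m+1), (b, 2*m+2)}" using xy by blast
      show ?thesis using wfM_range[OF w, of x y] old(1,2)[OF o] by simp
    qed
  next
    fix x assume x1: "1 \<le> x" and x2: "x \<le> 2*m"
    then obtain y where y: "(x,y)\<in>S \<or> (y,x)\<in>S" using wfM_cover[OF w, of x] by auto
    show "\<exists>y. (x, y) \<in> ?R \<or> (y, x) \<in> ?R"
    proof (cases "x = a \<or> x = b")
      case True then show ?thesis by blast
    next
      case False
      then have "(x,y) \<in> S - {(a, 2*m+1), (b, 2*m+2)} \<or> (y,x) \<in> S - {(a, 2*m+1), (b, 2*m+2)}"
        using y x2 by auto
      then show ?thesis by blast
    qed
  next
    fix x y u v assume xy: "(x,y) \<in> ?R" and uv: "(u,v) \<in> ?R" and sh: "x = u \<or> x = v \<or> y = u \<or> y = v"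
    show "x = u \<and> y = v"
    proof (cases "(x,y) = (b,a)")
      case True
      show ?thesis
      proof (cases "(u,v) = (b,a)")
        case True with \<open>(x,y) = (b,a)\<close> show ?thesis by simp
      next
        case False
        then have "(u,v) \<in> S - {(a, 2*m+1), (b, 2*m+2)}" using uv by blast
        from old[OF this] \<open>(x,y) = (b,a)\<close> sh show ?thesis by auto
      qed
    next
      case False
      then have o1: "(x,y) \<in> S - {(a, 2*m+1), (b, 2*m+2)}" using xy by blast
      show ?thesis
      proof (cases "(u,v) = (b,a)")
        case True
        from old[OF o1] True sh show ?thesis by auto
      next
        case False
        then have "(u,v) \<in> S - {(a, 2*m+1), (b, 2*m+2)}" using uv by blast
        then show ?thesis using o1 wfM_disj[OF w, of x y u v] sh by auto
      qed
    qed
  next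
    fix x y u v assume xy: "(x,y) \<in> ?R" and uv: "(u,v) \<in> ?R" and c1: "x < u" and c2: "u < y" and c3: "y < v"
    have c: "x < u \<and> u < y \<and> y < v" using c1 c2 c3 by simp
      show False
      proof (cases "(x,y) = (b,a)")
        case True
        then have "(u,v) \<noteq> (b,a)" using c by auto
        then have o2: "(u,v) \<in> S - {(a, 2*m+1), (b, 2*m+2)}" using uv by blast
        have "v < 2*m+1" using old(2)[OF o2] by simp
        then show False using wfM_nc[OF w, of u v a "2*m+1"] o2 a c True by auto
      next
        case False
        then have o1: "(x,y) \<in> S - {(a, 2*m+1), (b, 2*m+2)}" using xy by blast
        show False
        proof (cases "(u,v) = (b,a)")
          case True
          have "y < 2*m+2" using old(2)[OF o1] by simp
          then show False using wfM_nc[OF w, of x y b "2*m+2"] o1 b c True by auto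
        next
          case False
          then have "(u,v) \<in> S - {(a, 2*m+1), (b, 2*m+2)}" using uv by blast
          then show False using o1 wfM_nc[OF w, of x y u v] c by auto
        qed
      qed
  qed
qed

lemma M2:
  assumes w: "wfM m R"
  shows "wfM (Suc m) (plusM m R)" "parentM m (plusM m R) = R" "exM (plusM m R) = Suc (exM R)"
proof -
  have nr: "(2*m+1, 2*m+2) \<notin> R" using wfM_range[OF w, of "2*m+1" "2*m+2"] by auto
  have rng: "b \<le> 2*m" "a \<le> 2*m" if "(a,b) \<in> R" for a b using wfM_range[OF w that] by auto
  show "wfM (Suc m) (plusM m R)" unfolding plusM_def
  proof (rule wfM_I)
    fix a b assume "(a,b) \<in> insert (2*m+1, 2*m+2) R"
    then show "1 \<le> a \<and> a < b \<and> b \<le> 2 * Suc m" using wfM_range[OF w, of a b] by auto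
  next
    fix x assume "1 \<le> x" "x \<le> 2 * Suc m"
    then have "x \<le> 2*m+2" by simp
    then consider "x \<le> 2*m" | "x = 2*m+1" | "x = 2*m+2" by linarith
    then show "\<exists>y. (x, y) \<in> insert (2*m+1, 2*m+2) R \<or> (y, x) \<in> insert (2*m+1, 2*m+2) R"
    proof cases
      case 1 then show ?thesis using wfM_cover[OF w \<open>1 \<le> x\<close>] by blast
    qed auto
  next
    fix a b c d assume ab: "(a,b) \<in> insert (2*m+1, 2*m+2) R" and cd: "(c,d) \<in> insert (2*m+1, 2*m+2) R"
      and sh: "a = c \<or> a = d \<or> b = c \<or> b = d"
    show "a = c \<and> b = d"
    proof (cases "(a,b) \<in> R")
      case True
      note r1 = wfM_range[OF w True]
      show ?thesis
      proof (cases "(c,d) \<in> R")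
        case True then show ?thesis using wfM_disj[OF w \<open>(a,b) \<in> R\<close> True sh] by blast
      next
        case False then have "c = 2*m+1" "d = 2*m+2" using cd by auto
        then show ?thesis using r1 sh by auto
      qed
    next
      case False then have ab': "a = 2*m+1" "b = 2*m+2" using ab by auto
      show ?thesis
      proof (cases "(c,d) \<in> R")
        case True
        note r2 = wfM_range[OF w True]
        show ?thesis using r2 sh ab' by auto
      next
        case False then have "c = 2*m+1" "d = 2*m+2" using cd by auto
        then show ?thesis using ab' by auto
      qed
    qed
  next
    fix a b c d assume ab: "(a,b) \<in> insert (2*m+1, 2*m+2) R" and cd: "(c,d) \<in> insert (2*m+1, 2*m+2) R"
      and o: "a < c" "c < b" "b < d"
    show False
    proof (cases "(a,b) \<in> R")
      case True
      note r1 = wfM_range[OF w True]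
      show ?thesis
      proof (cases "(c,d) \<in> R")
        case True then show ?thesis using wfM_nc[OF w \<open>(a,b) \<in> R\<close> True o] by blast
      next
        case False then have "c = 2*m+1" "d = 2*m+2" using cd by auto
        then show ?thesis using r1 o by auto
      qed
    next
      case False then have ab': "a = 2*m+1" "b = 2*m+2" using ab by auto
      show ?thesis
      proof (cases "(c,d) \<in> R")
        case True
        note r2 = wfM_range[OF w True]
        show ?thesis using r2 o ab' by auto
      next
        case False then have "c = 2*m+1" "d = 2*m+2" using cd by auto
        then show ?thesis using ab' o by auto
      qed
    qed
  qed
  show "parentM m (plusM m R) = R" unfolding parentM_def plusM_def using nr by auto
  have "outer (plusM m R) = insert (2*m+1, 2*m+2) (outer R)"
  proof (rule set_eqI, safe)
    fix x y assume "(x,y) \<in> outer (plusM m R)" "(x,y) \<notin> outer R"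
    then show "x = 2*m+1" "y = 2*m+2" unfolding outer_def plusM_def by auto
  next
    show "(2*m+1, 2*m+2) \<in> outer (plusM m R)" unfolding outer_def plusM_def using rng by fastforce
  next
    fix x y assume xy: "(x,y) \<in> outer R"
    then have xyR: "(x,y) \<in> R" unfolding outer_def by auto
    have no: "\<not>(\<exists>c d. (c,d)\<in>R \<and> c<x \<and> y<d)" using xy unfolding outer_def by auto
    show "(x,y) \<in> outer (plusM m R)" unfolding outer_def plusM_def
      using xyR no rng[OF xyR] by auto
  qed
  moreover have "(2*m+1, 2*m+2) \<notin> outer R" using nr unfolding outer_def by auto
  ultimately show "exM (plusM m R) = Suc (exM R)" unfolding exM_def using outer_finite[OF w] by simp
qed

lemma ba_outer:
  assumes w: "wfM (Suc m) S" and np: "(2*m+1, 2*m+2) \<notin> S"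
    and a: "(a, 2*m+1) \<in> S" and b: "(b, 2*m+2) \<in> S"
  shows "(b, a) \<in> outer (parentM m S)"
proof -
  have pe: "parentM m S = (S - {(a, 2*m+1), (b, 2*m+2)}) \<union> {(b, a)}" using parentM_eq[OF w np a b] .
  have wR: "wfM m (parentM m S)" using M1[OF w] .
  show ?thesis unfolding outer_def
  proof (safe)
    show "(b,a) \<in> parentM m S" using pe by simp
  next
    fix c d assume cd: "(c,d) \<in> parentM m S" and c: "c < fst (b,a)" and d: "snd (b,a) < d"
    then have "(c,d) \<noteq> (b,a)" by auto
    then have cdS: "(c,d) \<in> S" using cd unfolding pe by blast
    have "d \<le> 2*m" using wfM_range[OF wR cd] by simp
    have "b < a" using wfM_range[OF wR, of b a] pe by simp
    then show False using wfM_nc[OF w cdS b] c d wfM_range[OF wR cd] by simp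
  qed
qed

lemma outer_S:
  assumes w: "wfM (Suc m) S" and np: "(2*m+1, 2*m+2) \<notin> S"
    and a: "(a, 2*m+1) \<in> S" and b: "(b, 2*m+2) \<in> S" and ba: "b < a"
  shows "outer S = insert (b, 2*m+2) {p\<in>outer (parentM m S). snd p < b}"
proof -
  have pe: "parentM m S = (S - {(a, 2*m+1), (b, 2*m+2)}) \<union> {(b, a)}" using parentM_eq[OF w np a b] .
  have wR: "wfM m (parentM m S)" using M1[OF w] .
  show ?thesis
  proof (rule equalityI; rule subsetI)
    fix p assume "p \<in> outer S"
    then obtain x y where pxy: "p = (x,y)" and xy: "(x,y) \<in> outer S" by (cases p) auto
    show "p \<in> insert (b, 2*m+2) {p\<in>outer (parentM m S). snd p < b}"
    proof (cases "(x,y) \<in> {p\<in>outer (parentM m S). snd p < b}")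
      case True then show ?thesis using pxy by simp
    next
      case False
      note ne = False
    have xyS: "(x,y) \<in> S" and no: "\<And>c d. (c,d) \<in> S \<Longrightarrow> c < x \<Longrightarrow> y < d \<Longrightarrow> False"
      using xy unfolding outer_def by auto
      have "(x,y) = (b, 2*m+2)"
      proof (rule ccontr)
        assume nb: "(x,y) \<noteq> (b, 2*m+2)"
        have na: "(x,y) \<noteq> (a, 2*m+1)"
        proof
          assume "(x,y) = (a, 2*m+1)"
          then show False using no[OF b] ba by auto
        qed
        have xyR: "(x,y) \<in> parentM m S" unfolding pe using xyS nb na by blast
        have yr: "y \<le> 2*m" using wfM_range[OF wR xyR] by blast
        have xb: "x \<noteq> b"
        proof
          assume "x = b" then show False using wfM_disj[OF w xyS b] nb by simp
        qed
        have yb: "y \<noteq> b"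
        proof
          assume "y = b" then show False using wfM_disj[OF w xyS b] nb by simp
        qed
        have "\<not> b < x" using no[OF b] yr by auto
        then have "x < b" using xb by simp
        moreover have "\<not> b < y" using wfM_nc[OF w xyS b] \<open>x < b\<close> yr by auto
        ultimately have yltb: "y < b" using yb by simp
        have "(x,y) \<in> outer (parentM m S)" unfolding outer_def
        proof (safe)
          show "(x,y) \<in> parentM m S" using xyR .
        next
          fix c d assume cd: "(c,d) \<in> parentM m S" "c < fst (x,y)" "snd (x,y) < d"
          show False
          proof (cases "(c,d) = (b,a)")
            case True then show False using cd \<open>x < b\<close> by simp
          next
            case False then have "(c,d) \<in> S" using cd unfolding pe by blast
            then show False using no cd by simp
          qed
        qed
        then show False using ne yltb by simp
      qed
      then show ?thesis using pxy by simp
    qed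
  next
    fix p assume "p \<in> insert (b, 2*m+2) {p\<in>outer (parentM m S). snd p < b}"
    then consider "p = (b, 2*m+2)" | "p \<in> outer (parentM m S)" "snd p < b" by auto
    then show "p \<in> outer S"
    proof cases
      case 1
      have "\<not>(\<exists>c d. (c,d)\<in>S \<and> c<b \<and> 2*m+2<d)" using wfM_range[OF w] by fastforce
      then show ?thesis unfolding outer_def using b 1 by simp
    next
      case 2
    obtain x y where pxy: "p = (x,y)" by (cases p) auto
    have xy: "(x,y) \<in> outer (parentM m S)" and yb: "snd (x,y) < b" using 2 pxy by auto
    have xyR: "(x,y) \<in> parentM m S" and no: "\<And>c d. (c,d) \<in> parentM m S \<Longrightarrow> c < x \<Longrightarrow> y < d \<Longrightarrow> False"
      using xy unfolding outer_def by auto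
    have "(x,y) \<noteq> (b,a)" using yb ba by auto
    then have xyS: "(x,y) \<in> S" using xyR unfolding pe by blast
    have xy': "x < y" using wfM_range[OF w xyS] by simp
    have "(x,y) \<in> outer S" unfolding outer_def
    proof (safe)
      show "(x,y) \<in> S" using xyS .
    next
      fix c d assume cd: "(c,d) \<in> S" "c < fst (x,y)" "snd (x,y) < d"
      show False
      proof (cases "(c,d) = (a, 2*m+1) \<or> (c,d) = (b, 2*m+2)")
        case True then show False using cd yb ba xy' by auto
      next
        case False then have "(c,d) \<in> parentM m S" using cd unfolding pe by blast
        then show False using no cd by simp
      qed
    qed
    then show ?thesis using pxy by simp
    qed
  qed
qed

lemma exM_S:
  assumes w: "wfM (Suc m) S" and np: "(2*m+1, 2*m+2) \<notin> S"
    and a: "(a, 2*m+1) \<in> S" and b: "(b, 2*m+2) \<in> S" and ba: "b < a"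
  shows "exM S = Suc (rk (parentM m S) b)"
proof -
  have wR: "wfM m (parentM m S)" using M1[OF w] .
  have f: "finite {p\<in>outer (parentM m S). snd p < b}" using outer_finite[OF wR] by simp
  have "(b, 2*m+2) \<notin> {p\<in>outer (parentM m S). snd p < b}" using wfM_range[OF w b] by auto
  then show ?thesis unfolding exM_def rk_def outer_S[OF assms] using f by simp
qed

lemma rk_lt:
  assumes w: "wfM m R" and p: "(b,a) \<in> outer R"
  shows "rk R b < exM R"
proof -
  have ba: "b < a" using p wfM_range[OF w, of b a] unfolding outer_def by auto
  have "(b,a) \<notin> {p\<in>outer R. snd p < b}" using ba by auto
  then have "{p\<in>outer R. snd p < b} \<subset> outer R"
    using p by blast
  then show ?thesis unfolding rk_def exM_def using outer_finite[OF w] psubset_card_mono by blast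
qed

lemma rk_mono:
  assumes w: "wfM m R" and p1: "(b1,a1) \<in> outer R" and p2: "(b2,a2) \<in> outer R" and lt: "b1 < b2"
  shows "rk R b1 < rk R b2"
proof -
  have r1: "(b1,a1) \<in> R" and r2: "(b2,a2) \<in> R" using p1 p2 unfolding outer_def by auto
  have "a1 < b2"
  proof (rule ccontr)
    assume "\<not> a1 < b2"
    moreover have "a1 \<noteq> b2" using wfM_disj[OF w r1 r2] lt by auto
    ultimately have "b2 < a1" by simp
    have "a2 \<noteq> a1" using wfM_disj[OF w r1 r2] lt by auto
    moreover have "\<not> a2 < a1" using p2 r1 lt unfolding outer_def by auto
    moreover have "\<not> a1 < a2" using wfM_nc[OF w r1 r2] lt \<open>b2 < a1\<close> by auto
    ultimately show False by simp
  qed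
  have "{p\<in>outer R. snd p < b1} \<subset> {p\<in>outer R. snd p < b2}"
  proof
    show "{p\<in>outer R. snd p < b1} \<subseteq> {p\<in>outer R. snd p < b2}" using lt by auto
    have "(b1,a1) \<in> {p\<in>outer R. snd p < b2}" using p1 \<open>a1 < b2\<close> by simp
    moreover have "(b1,a1) \<notin> {p\<in>outer R. snd p < b1}" using wfM_range[OF w r1] by simp
    ultimately show "{p\<in>outer R. snd p < b1} \<noteq> {p\<in>outer R. snd p < b2}" by blast
  qed
  then show ?thesis unfolding rk_def using outer_finite[OF w] psubset_card_mono
    by (metis (no_types, lifting) finite_subset mem_Collect_eq subsetI)
qed

lemma rk_inj:
  assumes w: "wfM m R" and p1: "(b1,a1) \<in> outer R" and p2: "(b2,a2) \<in> outer R" and eq: "rk R b1 = rk R b2"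
  shows "b1 = b2"
  using rk_mono[OF w p1 p2] rk_mono[OF w p2 p1] eq by (cases b1 b2 rule: linorder_cases) auto

lemma M3:
  assumes w: "wfM (Suc m) S" and np: "(2*m+1, 2*m+2) \<notin> S"
  shows "exM S \<le> exM (parentM m S)"
proof -
  obtain a b where a: "(a, 2*m+1) \<in> S" and b: "(b, 2*m+2) \<in> S" and ba: "b < a"
    using last_pairs[OF w np] by blast
  show ?thesis using exM_S[OF w np a b ba] rk_lt[OF M1[OF w] ba_outer[OF w np a b]] by simp
qed

lemma S_recon:
  assumes w: "wfM (Suc m) S" and np: "(2*m+1, 2*m+2) \<notin> S"
    and a: "(a, 2*m+1) \<in> S" and b: "(b, 2*m+2) \<in> S"
  shows "S = (parentM m S - {(b,a)}) \<union> {(a, 2*m+1), (b, 2*m+2)}"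
proof -
  have pe: "parentM m S = (S - {(a, 2*m+1), (b, 2*m+2)}) \<union> {(b, a)}" using parentM_eq[OF w np a b] .
  have "(b,a) \<notin> S"
  proof
    assume "(b,a) \<in> S"
    then have "a = 2*m+2" using wfM_disj[OF w _ b, of b a] by simp
    then show False using wfM_range[OF w a] by simp
  qed
  then show ?thesis unfolding pe using a b by blast
qed

lemma M4:
  assumes w1: "wfM (Suc m) S1" and np1: "(2*m+1, 2*m+2) \<notin> S1"
    and w2: "wfM (Suc m) S2" and np2: "(2*m+1, 2*m+2) \<notin> S2"
    and pe: "parentM m S1 = parentM m S2" and ee: "exM S1 = exM S2"
  shows "S1 = S2"
proof -
  obtain a1 b1 where a1: "(a1, 2*m+1) \<in> S1" and b1: "(b1, 2*m+2) \<in> S1" and ba1: "b1 < a1"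
    using last_pairs[OF w1 np1] by blast
  obtain a2 b2 where a2: "(a2, 2*m+1) \<in> S2" and b2: "(b2, 2*m+2) \<in> S2" and ba2: "b2 < a2"
    using last_pairs[OF w2 np2] by blast
  define R where "R = parentM m S1"
  have wR: "wfM m R" using M1[OF w1] R_def by simp
  have o1: "(b1,a1) \<in> outer R" using ba_outer[OF w1 np1 a1 b1] R_def by simp
  have o2: "(b2,a2) \<in> outer R" using ba_outer[OF w2 np2 a2 b2] R_def pe by simp
  have "rk R b1 = rk R b2" using exM_S[OF w1 np1 a1 b1 ba1] exM_S[OF w2 np2 a2 b2 ba2] ee pe R_def by simp
  then have bb: "b1 = b2" using rk_inj[OF wR o1 o2] by simp
  have "(b1,a1) \<in> R" "(b2,a2) \<in> R" using o1 o2 unfolding outer_def by auto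
  then have aa: "a1 = a2" using wfM_disj[OF wR] bb by blast
  have "(parentM m S1 - {(b1,a1)}) \<union> {(a1, 2*m+1), (b1, 2*m+2)} = (parentM m S2 - {(b2,a2)}) \<union> {(a2, 2*m+1), (b2, 2*m+2)}"
    using pe aa bb by simp
  then show ?thesis using S_recon[OF w1 np1 a1 b1] S_recon[OF w2 np2 a2 b2] by argo
qed



lemma rank_exists:
  assumes w: "wfM m R" and j: "j < exM R"
  shows "\<exists>b a. (b,a) \<in> outer R \<and> rk R b = j"
proof -
  define f where "f = (\<lambda>p::nat\<times>nat. rk R (fst p))"
  have inj: "inj_on f (outer R)"
  proof (rule inj_onI)
    fix p q assume p: "p \<in> outer R" and q: "q \<in> outer R" and e: "f p = f q"
    obtain b1 a1 where p1: "p = (b1,a1)" by (cases p) auto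
    obtain b2 a2 where q1: "q = (b2,a2)" by (cases q) auto
    have bb: "b1 = b2" using rk_inj[OF w, of b1 a1 b2 a2] p q e p1 q1 f_def by simp
    have "(b1,a1) \<in> R" "(b2,a2) \<in> R" using p q p1 q1 unfolding outer_def by auto
    then have "a1 = a2" using wfM_disj[OF w] bb by blast
    then show "p = q" using p1 q1 bb by simp
  qed
  have sub: "f ` outer R \<subseteq> {..<exM R}"
  proof
    fix x assume "x \<in> f ` outer R"
    then obtain p where p: "p \<in> outer R" "x = f p" by auto
    obtain b a where "p = (b,a)" by (cases p) auto
    then show "x \<in> {..<exM R}" using rk_lt[OF w] p f_def by auto
  qed
  have "card (f ` outer R) = exM R" using card_image[OF inj] exM_def by simp
  then have "f ` outer R = {..<exM R}"
    using card_subset_eq[OF _ sub] by simp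
  then have "j \<in> f ` outer R" using j by simp
  then obtain p where "p \<in> outer R" "f p = j" by auto
  then show ?thesis unfolding f_def by (cases p) auto
qed

lemma disj_ne:
  assumes w: "wfM m R" and xy: "(x,y) \<in> R" and ba: "(b,a) \<in> R" and ne: "(x,y) \<noteq> (b,a)"
  shows "x \<noteq> a \<and> x \<noteq> b \<and> y \<noteq> a \<and> y \<noteq> b"
proof -
  have D: "x = b \<and> y = a" if "x = b \<or> x = a \<or> y = b \<or> y = a"
    using wfM_disj[OF w xy ba that] .
  have "\<not> (x = b \<and> y = a)" using ne by blast
  then show ?thesis using D by blast
qed

lemma M5:
  assumes w: "wfM m R" and j1: "1 \<le> j" and j2: "j \<le> exM R"
  shows "\<exists>S. wfM (Suc m) S \<and> (2*m+1, 2*m+2) \<notin> S \<and> parentM m S = R \<and> exM S = j"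
proof -
  have jl: "j - 1 < exM R" using j1 j2 by simp
  obtain b a where ob: "(b,a) \<in> outer R" and rkb: "rk R b = j - 1"
    using rank_exists[OF w jl] by blast
  have baR: "(b,a) \<in> R" using ob unfolding outer_def by auto
  have nenc: "\<And>c d. (c,d) \<in> R \<Longrightarrow> c < b \<Longrightarrow> a < d \<Longrightarrow> False" using ob unfolding outer_def by auto
  have rba: "1 \<le> b" "b < a" "a \<le> 2*m" using wfM_range[OF w baR] by auto
  define S where "S = (R - {(b,a)}) \<union> {(a, 2*m+1), (b, 2*m+2)}"
  have old: "x \<noteq> a" "x \<noteq> b" "y \<noteq> a" "y \<noteq> b" "y \<le> 2*m" "1 \<le> x" "x < y"
    if "(x,y) \<in> R - {(b,a)}" for x y
  proof -
    have xy: "(x,y) \<in> R" "(x,y) \<noteq> (b,a)" using that by auto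
    show "x \<noteq> a" "x \<noteq> b" "y \<noteq> a" "y \<noteq> b"
      using disj_ne[OF w xy(1) baR xy(2)] by simp_all
    show "y \<le> 2*m" "1 \<le> x" "x < y" using wfM_range[OF w xy(1)] by auto
  qed
  have memS: "(x,y) \<in> S \<longleftrightarrow> (x,y) \<in> R - {(b,a)} \<or> (x,y) = (a, 2*m+1) \<or> (x,y) = (b, 2*m+2)" for x y
    unfolding S_def by auto
  have wS: "wfM (Suc m) S"
  proof (rule wfM_I)
    fix x y assume "(x,y) \<in> S"
    then consider "(x,y) \<in> R - {(b,a)}" | "(x,y) = (a, 2*m+1)" | "(x,y) = (b, 2*m+2)" using memS by blast
    then show "1 \<le> x \<and> x < y \<and> y \<le> 2 * Suc m"
    proof cases
      case 1 then show ?thesis using old[OF 1] by simp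
    qed (use rba in auto)
  next
    fix x assume x1: "1 \<le> x" and x2: "x \<le> 2 * Suc m"
    show "\<exists>y. (x, y) \<in> S \<or> (y, x) \<in> S"
    proof (cases "x \<le> 2*m")
      case True
      show ?thesis
      proof (cases "x = a \<or> x = b")
        case True then show ?thesis unfolding S_def by blast
      next
        case False
        obtain y where "(x,y) \<in> R \<or> (y,x) \<in> R" using wfM_cover[OF w x1 \<open>x \<le> 2*m\<close>] by blast
        then have "(x,y) \<in> R - {(b,a)} \<or> (y,x) \<in> R - {(b,a)}" using False by auto
        then show ?thesis using memS by blast
      qed
    next
      case False
      then have "x = 2*m+1 \<or> x = 2*m+2" using x2 by (simp, linarith)
      then show ?thesis unfolding S_def by blast
    qed
  next
    fix x y u v assume xy: "(x,y) \<in> S" and uv: "(u,v) \<in> S" and sh: "x = u \<or> x = v \<or> y = u \<or> y = v"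
    from xy consider "(x,y) \<in> R - {(b,a)}" | "(x,y) = (a, 2*m+1)" | "(x,y) = (b, 2*m+2)" using memS by blast
    then show "x = u \<and> y = v"
    proof cases
      case 1
      from uv consider "(u,v) \<in> R - {(b,a)}" | "(u,v) = (a, 2*m+1)" | "(u,v) = (b, 2*m+2)" using memS by blast
      then show ?thesis
      proof cases
        case 1 then show ?thesis using wfM_disj[OF w, of x y u v] \<open>(x,y) \<in> R - {(b,a)}\<close> sh by blast
      next
        case 2 then show ?thesis using old[OF \<open>(x,y) \<in> R - {(b,a)}\<close>] sh by auto
      next
        case 3 then show ?thesis using old[OF \<open>(x,y) \<in> R - {(b,a)}\<close>] sh by auto
      qed
    next
      case 2
      from uv consider "(u,v) \<in> R - {(b,a)}" | "(u,v) = (a, 2*m+1)" | "(u,v) = (b, 2*m+2)" using memS by blast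
      then show ?thesis
      proof cases
        case 1 then show ?thesis using old[OF 1] sh \<open>(x,y) = (a, 2*m+1)\<close> by auto
      next
        case 2 then show ?thesis using \<open>(x,y) = (a, 2*m+1)\<close> by simp
      next
        case 3 then show ?thesis using \<open>(x,y) = (a, 2*m+1)\<close> sh rba by auto
      qed
    next
      case 3
      from uv consider "(u,v) \<in> R - {(b,a)}" | "(u,v) = (a, 2*m+1)" | "(u,v) = (b, 2*m+2)" using memS by blast
      then show ?thesis
      proof cases
        case 1 then show ?thesis using old[OF 1] sh \<open>(x,y) = (b, 2*m+2)\<close> by auto
      next
        case 2 then show ?thesis using \<open>(x,y) = (b, 2*m+2)\<close> sh rba by auto
      next
        case 3 then show ?thesis using \<open>(x,y) = (b, 2*m+2)\<close> by simp
      qed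
    qed
  next
    fix x y u v assume xy: "(x,y) \<in> S" and uv: "(u,v) \<in> S" and c1: "x < u" and c2: "u < y" and c3: "y < v"
    from xy consider "(x,y) \<in> R - {(b,a)}" | "(x,y) = (a, 2*m+1)" | "(x,y) = (b, 2*m+2)" using memS by blast
    then show False
    proof cases
      case 1
      note o1 = old[OF 1]
      have xyR: "(x,y) \<in> R" using 1 by simp
      from uv consider "(u,v) \<in> R - {(b,a)}" | "(u,v) = (a, 2*m+1)" | "(u,v) = (b, 2*m+2)" using memS by blast
      then show False
      proof cases
        case 1 then show False using wfM_nc[OF w xyR _ c1 c2 c3] by simp
      next
        case 2
        then have ua: "u = a" by simp
        show False
        proof (cases "x < b")
          case True then show False using nenc[OF xyR] c2 ua by simp
        next
          case False
          then have "b < x" using o1 by simp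
          then show False using wfM_nc[OF w baR xyR] c1 c2 ua by simp
        qed
      next
        case 3
        then have ub: "u = b" by simp
        show False
        proof (cases "y < a")
          case True then show False using wfM_nc[OF w xyR baR] c1 c2 ub by simp
        next
          case False
          then have "a < y" using o1 by simp
          then show False using nenc[OF xyR] c1 ub by simp
        qed
      qed
    next
      case 2
      from uv consider "(u,v) \<in> R - {(b,a)}" | "(u,v) = (a, 2*m+1)" | "(u,v) = (b, 2*m+2)" using memS by blast
      then show False
      proof cases
        case 1 then show False using old[OF 1] \<open>(x,y) = (a, 2*m+1)\<close> c3 by simp
      next
        case 2 then show False using \<open>(x,y) = (a, 2*m+1)\<close> c1 by simp
      next
        case 3 then show False using \<open>(x,y) = (a, 2*m+1)\<close> c1 rba by simp
      qed
    next
      case 3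
      from uv consider "(u,v) \<in> R - {(b,a)}" | "(u,v) = (a, 2*m+1)" | "(u,v) = (b, 2*m+2)" using memS by blast
      then show False
      proof cases
        case 1 then show False using old[OF 1] \<open>(x,y) = (b, 2*m+2)\<close> c3 by simp
      next
        case 2 then show False using \<open>(x,y) = (b, 2*m+2)\<close> c3 by simp
      next
        case 3 then show False using \<open>(x,y) = (b, 2*m+2)\<close> c1 by simp
      qed
    qed
  qed
  have np: "(2*m+1, 2*m+2) \<notin> S" unfolding S_def using rba wfM_range[OF w, of "2*m+1" "2*m+2"] by auto
  have aS: "(a, 2*m+1) \<in> S" and bS: "(b, 2*m+2) \<in> S" unfolding S_def by auto
  have nR: "(a, 2*m+1) \<notin> R" "(b, 2*m+2) \<notin> R" using wfM_range[OF w, of a "2*m+1"] wfM_range[OF w, of b "2*m+2"] by auto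
  have "parentM m S = (S - {(a, 2*m+1), (b, 2*m+2)}) \<union> {(b, a)}" using parentM_eq[OF wS np aS bS] .
  also have "\<dots> = R" unfolding S_def using nR baR by blast
  finally have pS: "parentM m S = R" .
  have "exM S = Suc (rk (parentM m S) b)" using exM_S[OF wS np aS bS] rba by simp
  then have "exM S = j" using pS rkb j1 by simp
  then show ?thesis using wS np pS by blast
qed


definition unexp :: "nat \<Rightarrow> nat \<Rightarrow> nat" where
  "unexp m x = (if x = 2*m then 0 else x)"

definition gM :: "nat \<Rightarrow> nat \<times> nat \<Rightarrow> nat set" where
  "gM m p = {unexp m (fst p), unexp m (snd p)}"

definition U :: "nat \<Rightarrow> (nat \<times> nat) set \<Rightarrow> nat set set" where
  "U m R = gM m ` R"

lemma expos_unexp: "1 \<le> x \<Longrightarrow> x \<le> 2*m \<Longrightarrow> expos m (unexp m x) = x"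
  unfolding expos_def unexp_def by auto

lemma unexp_lt: "1 \<le> x \<Longrightarrow> x \<le> 2*m \<Longrightarrow> unexp m x < 2*m"
  unfolding unexp_def by auto

lemma unexp_expos: "x < 2*m \<Longrightarrow> unexp m (expos m x) = x"
  unfolding expos_def unexp_def by auto

lemma expos_range: "x < 2*m \<Longrightarrow> 1 \<le> expos m x \<and> expos m x \<le> 2*m"
  unfolding expos_def by auto

lemma expos_inj: "x < 2*m \<Longrightarrow> y < 2*m \<Longrightarrow> expos m x = expos m y \<Longrightarrow> x = y"
  unfolding expos_def by (cases "x = 0"; cases "y = 0") auto

lemma gM_img: "1 \<le> a \<Longrightarrow> a \<le> 2*m \<Longrightarrow> 1 \<le> b \<Longrightarrow> b \<le> 2*m \<Longrightarrow> expos m ` gM m (a,b) = {a,b}"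
  unfolding gM_def by (simp add: expos_unexp)

lemma gM_inj:
  assumes "1 \<le> a" "a < b" "b \<le> 2*m" "1 \<le> c" "c < d" "d \<le> 2*m" "gM m (a,b) = gM m (c,d)"
  shows "a = c \<and> b = d"
proof -
  have "expos m ` gM m (a,b) = {a,b}" using gM_img[of a m b] assms by simp
  moreover have "expos m ` gM m (c,d) = {c,d}" using gM_img[of c m d] assms by simp
  ultimately have "{a,b} = {c,d}" using assms(7) by simp
  then show ?thesis using assms(2,5) by (auto simp: doubleton_eq_iff)
qed

lemma gM_inj_on: "wfM m R \<Longrightarrow> inj_on (gM m) R"
proof (rule inj_onI)
  fix p q assume w: "wfM m R" and p: "p \<in> R" and q: "q \<in> R" and e: "gM m p = gM m q"
  obtain a b where ab: "p = (a,b)" by (cases p) auto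
  obtain c d where cd: "q = (c,d)" by (cases q) auto
  show "p = q" using gM_inj[of a b m c d] wfM_range[OF w, of a b] wfM_range[OF w, of c d] p q e ab cd by auto
qed

lemma Umem:
  assumes w: "wfM m R" and p: "{x,y} \<in> U m R"
  shows "(expos m x, expos m y) \<in> R \<or> (expos m y, expos m x) \<in> R"
proof -
  obtain a b where ab: "(a,b) \<in> R" and e: "{x,y} = gM m (a,b)" using p unfolding U_def by auto
  have r: "1 \<le> a" "a < b" "b \<le> 2*m" using wfM_range[OF w ab] by auto
  have "expos m ` {x,y} = {a,b}" using gM_img[of a m b] r e by simp
  then have "{expos m x, expos m y} = {a,b}" by simp
  then show ?thesis using ab by (auto simp: doubleton_eq_iff)
qed

lemma LP_pair: "\<sigma> \<in> LP m \<Longrightarrow> p \<in> \<sigma> \<Longrightarrow> \<exists>a b. p = {a,b} \<and> a \<noteq> b \<and> a < 2*m \<and> b < 2*m"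
  unfolding LP_def by blast
lemma LP_uniq: "\<sigma> \<in> LP m \<Longrightarrow> x < 2*m \<Longrightarrow> p \<in> \<sigma> \<Longrightarrow> q \<in> \<sigma> \<Longrightarrow> x \<in> p \<Longrightarrow> x \<in> q \<Longrightarrow> p = q"
  unfolding LP_def by blast
lemma LP_ex: "\<sigma> \<in> LP m \<Longrightarrow> x < 2*m \<Longrightarrow> \<exists>p\<in>\<sigma>. x \<in> p"
  unfolding LP_def by blast
lemma LP_nc: "\<sigma> \<in> LP m \<Longrightarrow> {a,b} \<in> \<sigma> \<Longrightarrow> {c,d} \<in> \<sigma> \<Longrightarrow> a < c \<Longrightarrow> c < b \<Longrightarrow> b < d \<Longrightarrow> False"
  unfolding LP_def by blast
lemma LP_I:
  assumes "\<And>p. p \<in> \<sigma> \<Longrightarrow> \<exists>a b. p = {a,b} \<and> a \<noteq> b \<and> a < 2*m \<and> b < 2*m"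
    and "\<And>x. x < 2*m \<Longrightarrow> \<exists>p\<in>\<sigma>. x \<in> p"
    and "\<And>x p q. x < 2*m \<Longrightarrow> p \<in> \<sigma> \<Longrightarrow> q \<in> \<sigma> \<Longrightarrow> x \<in> p \<Longrightarrow> x \<in> q \<Longrightarrow> p = q"
    and "\<And>a b c d. {a,b} \<in> \<sigma> \<Longrightarrow> {c,d} \<in> \<sigma> \<Longrightarrow> a < c \<Longrightarrow> c < b \<Longrightarrow> b < d \<Longrightarrow> False"
  shows "\<sigma> \<in> LP m"
  unfolding LP_def using assms by blast

lemma LP_other: "\<sigma> \<in> LP m \<Longrightarrow> p \<in> \<sigma> \<Longrightarrow> x \<in> p \<Longrightarrow> \<exists>y. p = {x,y} \<and> y \<noteq> x \<and> x < 2*m \<and> y < 2*m"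
  by (drule (1) LP_pair) auto

lemma U_LP_pre:
  assumes w: "wfM m R" and p: "p \<in> U m R"
  shows "\<exists>a b. p = {a,b} \<and> a \<noteq> b \<and> a < 2*m \<and> b < 2*m"
proof -
  obtain a b where ab: "(a,b) \<in> R" and p: "p = gM m (a,b)" using p unfolding U_def by auto
  have r: "1 \<le> a" "a < b" "b \<le> 2*m" using wfM_range[OF w ab] by auto
  have "expos m (unexp m a) = a" "expos m (unexp m b) = b" using expos_unexp[of a m] expos_unexp[of b m] r by simp_all
  then have "unexp m a \<noteq> unexp m b" using r by auto
  then show ?thesis
    using p unexp_lt[of a m] unexp_lt[of b m] r unfolding gM_def by auto
qed

lemma U_LP:
  assumes w: "wfM m R"
  shows "U m R \<in> LP m"
proof (rule LP_I)
  fix p assume "p \<in> U m R"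
  then show "\<exists>a b. p = {a,b} \<and> a \<noteq> b \<and> a < 2*m \<and> b < 2*m" using U_LP_pre[OF w] by blast
next
  fix x assume x: "x < 2*m"
  define z where "z = expos m x"
  have z: "1 \<le> z" "z \<le> 2*m" using expos_range[OF x] z_def by auto
  have ux: "unexp m z = x" using unexp_expos[OF x] z_def by simp
  obtain y where "(z,y) \<in> R \<or> (y,z) \<in> R" using wfM_cover[OF w z] by blast
  then show "\<exists>p\<in>U m R. x \<in> p"
  proof
    assume "(z,y) \<in> R" then show ?thesis unfolding U_def gM_def using ux by force
  next
    assume "(y,z) \<in> R" then show ?thesis unfolding U_def gM_def using ux by force
  qed
next
  fix x p q assume x: "x < 2*m" and p: "p \<in> U m R" and q: "q \<in> U m R" and xp: "x \<in> p" and xq: "x \<in> q"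
  obtain a b where ab: "(a,b) \<in> R" and pe: "p = gM m (a,b)" using p unfolding U_def by auto
  obtain c d where cd: "(c,d) \<in> R" and qe: "q = gM m (c,d)" using q unfolding U_def by auto
  have r1: "1 \<le> a" "a < b" "b \<le> 2*m" using wfM_range[OF w ab] by auto
  have r2: "1 \<le> c" "c < d" "d \<le> 2*m" using wfM_range[OF w cd] by auto
  have i1: "expos m ` p = {a,b}" using gM_img[of a m b] r1 pe by simp
  have i2: "expos m ` q = {c,d}" using gM_img[of c m d] r2 qe by simp
  have "expos m x \<in> {a,b}" using i1 xp by blast
  moreover have "expos m x \<in> {c,d}" using i2 xq by blast
  ultimately have "a = c \<or> a = d \<or> b = c \<or> b = d" by auto
  then have "a = c \<and> b = d" using wfM_disj[OF w ab cd] by blast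
  then show "p = q" using pe qe by simp
next
  fix a b c d assume ab: "{a,b} \<in> U m R" and cd: "{c,d} \<in> U m R" and o: "a < c" "c < b" "b < d"
  have lt: "b < 2*m" "d < 2*m" "a < 2*m" "c < 2*m"
  proof -
    obtain a' b' where "{a,b} = {a',b'}" "a' < 2*m" "b' < 2*m"
      using U_LP_pre[OF w ab] by blast
    then show "b < 2*m" "a < 2*m" by (auto simp: doubleton_eq_iff)
  next
    obtain a' b' where "{c,d} = {a',b'}" "a' < 2*m" "b' < 2*m"
      using U_LP_pre[OF w cd] by blast
    then show "d < 2*m" "c < 2*m" by (auto simp: doubleton_eq_iff)
  qed
  have e1: "(expos m a, expos m b) \<in> R \<or> (expos m b, expos m a) \<in> R" using Umem[OF w ab] .
  have e2: "(expos m c, expos m d) \<in> R \<or> (expos m d, expos m c) \<in> R" using Umem[OF w cd] .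
  have nz: "b \<noteq> 0" "c \<noteq> 0" "d \<noteq> 0" using o by auto
  then have eb: "expos m b = b" "expos m c = c" "expos m d = d" unfolding expos_def by auto
  have cdR: "(c,d) \<in> R" using e2 eb wfM_range[OF w, of d c] o by auto
  show False
  proof (cases "a = 0")
    case True
    then have "expos m a = 2*m" unfolding expos_def by simp
    then have "(b, 2*m) \<in> R" using e1 eb wfM_range[OF w, of "2*m" b] by auto
    then show False using wfM_nc[OF w cdR \<open>(b, 2*m) \<in> R\<close>] o lt by simp
  next
    case False
    then have "expos m a = a" unfolding expos_def by simp
    then have "(a,b) \<in> R" using e1 eb wfM_range[OF w, of b a] o by auto
    then show False using wfM_nc[OF w _ cdR] o by blast
  qed
qed


lemma U_inj:
  assumes w1: "wfM m R1" and w2: "wfM m R2" and e: "U m R1 = U m R2"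
  shows "R1 = R2"
proof -
  have sub: "R1 \<subseteq> R2" if wa: "wfM m R1" and wb: "wfM m R2" and e: "U m R1 = U m R2" for R1 R2
  proof
    fix p assume p: "p \<in> R1"
    obtain a b where ab: "p = (a,b)" by (cases p) auto
    have r: "1 \<le> a" "a < b" "b \<le> 2*m" using wfM_range[OF wa, of a b] p ab by auto
    have "gM m (a,b) \<in> U m R2" using e p ab unfolding U_def by auto
    then have "{unexp m a, unexp m b} \<in> U m R2" unfolding gM_def by simp
    from Umem[OF wb this] have "(a,b) \<in> R2 \<or> (b,a) \<in> R2" using expos_unexp r by simp
    then show "p \<in> R2" using wfM_range[OF wb, of b a] r ab by auto
  qed
  show ?thesis using sub[OF w1 w2 e] sub[OF w2 w1 e[symmetric]] by blast
qed

definition Tinv :: "nat \<Rightarrow> nat set set \<Rightarrow> (nat \<times> nat) set" where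
  "Tinv m \<sigma> = {(a,b). 1 \<le> a \<and> a < b \<and> b \<le> 2*m \<and> {unexp m a, unexp m b} \<in> \<sigma>}"

lemma pair_in_Tinv:
  assumes s: "\<sigma> \<in> LP m" and p: "{x,y} \<in> \<sigma>" and xy: "x \<noteq> y" "x < 2*m" "y < 2*m"
  shows "(expos m x, expos m y) \<in> Tinv m \<sigma> \<or> (expos m y, expos m x) \<in> Tinv m \<sigma>"
proof -
  have r: "1 \<le> expos m x" "expos m x \<le> 2*m" "1 \<le> expos m y" "expos m y \<le> 2*m"
    using expos_range[OF xy(2)] expos_range[OF xy(3)] by auto
  have ne: "expos m x \<noteq> expos m y" using expos_inj[OF xy(2) xy(3)] xy(1) by blast
  have u: "unexp m (expos m x) = x" "unexp m (expos m y) = y" using unexp_expos xy by auto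
  show ?thesis
  proof (cases "expos m x < expos m y")
    case True then show ?thesis unfolding Tinv_def using r u p by simp
  next
    case False then have "expos m y < expos m x" using ne by simp
    then show ?thesis unfolding Tinv_def using r u p by (simp add: insert_commute)
  qed
qed

lemma LP_U_surj:
  assumes s: "\<sigma> \<in> LP m"
  shows "wfM m (Tinv m \<sigma>) \<and> \<sigma> = U m (Tinv m \<sigma>)"
proof
  let ?R = "Tinv m \<sigma>"
  have memR: "(a,b) \<in> ?R \<longleftrightarrow> 1 \<le> a \<and> a < b \<and> b \<le> 2*m \<and> {unexp m a, unexp m b} \<in> \<sigma>" for a b
    unfolding Tinv_def by simp
  show w: "wfM m ?R"
  proof (rule wfM_I)
    fix a b assume "(a,b) \<in> ?R" then show "1 \<le> a \<and> a < b \<and> b \<le> 2*m" using memR by simp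
  next
    fix z assume z: "1 \<le> z" "z \<le> 2*m"
    define x where "x = unexp m z"
    have x: "x < 2*m" using unexp_lt[OF z] x_def by simp
    have ez: "expos m x = z" using expos_unexp[OF z] x_def by simp
    obtain p where p: "p \<in> \<sigma>" "x \<in> p" using LP_ex[OF s x] by blast
    obtain y where y: "p = {x,y}" "y \<noteq> x" "y < 2*m" using LP_other[OF s p] by blast
    have "(expos m x, expos m y) \<in> ?R \<or> (expos m y, expos m x) \<in> ?R"
      using pair_in_Tinv[OF s _ _ x y(3)] p y by simp
    then show "\<exists>y. (z,y) \<in> ?R \<or> (y,z) \<in> ?R" using ez by blast
  next
    fix a b c d assume ab: "(a,b) \<in> ?R" and cd: "(c,d) \<in> ?R" and sh: "a = c \<or> a = d \<or> b = c \<or> b = d"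
    have r1: "1 \<le> a" "a < b" "b \<le> 2*m" and p1: "{unexp m a, unexp m b} \<in> \<sigma>" using ab memR by auto
    have r2: "1 \<le> c" "c < d" "d \<le> 2*m" and p2: "{unexp m c, unexp m d} \<in> \<sigma>" using cd memR by auto
    obtain t where t: "t \<in> {a,b}" "t \<in> {c,d}" using sh by blast
    have t1: "1 \<le> t" "t \<le> 2*m" using t r1 by auto
    have "{unexp m a, unexp m b} = {unexp m c, unexp m d}"
      by (rule LP_uniq[OF s unexp_lt[OF t1] p1 p2]) (use t in auto)
    then have "gM m (a,b) = gM m (c,d)" unfolding gM_def by simp
    then show "a = c \<and> b = d" using gM_inj[of a b m c d] r1 r2 by simp
  next
    fix a b c d assume ab: "(a,b) \<in> ?R" and cd: "(c,d) \<in> ?R" and o: "a < c" "c < b" "b < d"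
    have r1: "1 \<le> a" "a < b" "b \<le> 2*m" and p1: "{unexp m a, unexp m b} \<in> \<sigma>" using ab memR by auto
    have r2: "1 \<le> c" "c < d" "d \<le> 2*m" and p2: "{unexp m c, unexp m d} \<in> \<sigma>" using cd memR by auto
    have ua: "unexp m a = a" "unexp m b = b" "unexp m c = c" unfolding unexp_def using o r2 by auto
    show False
    proof (cases "d = 2*m")
      case True
      then have "unexp m d = 0" unfolding unexp_def by simp
      then have "{0, c} \<in> \<sigma>" using p2 ua by (simp add: insert_commute)
      moreover have "{a, b} \<in> \<sigma>" using p1 ua by simp
      ultimately show False using LP_nc[OF s, of 0 c a b] o r1 by simp
    next
      case False
      then have "unexp m d = d" unfolding unexp_def by simp
      then show False using LP_nc[OF s, of a b c d] p1 p2 ua o by simp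
    qed
  qed
  show "\<sigma> = U m ?R"
  proof (rule equalityI; rule subsetI)
    fix p assume p: "p \<in> \<sigma>"
    obtain x y where xy: "p = {x,y}" "x \<noteq> y" "x < 2*m" "y < 2*m" using LP_pair[OF s p] by blast
    have u: "unexp m (expos m x) = x" "unexp m (expos m y) = y" using unexp_expos xy by auto
    have "(expos m x, expos m y) \<in> ?R \<or> (expos m y, expos m x) \<in> ?R"
      using pair_in_Tinv[OF s _ xy(2) xy(3) xy(4)] p xy(1) by simp
    then show "p \<in> U m ?R"
    proof
      assume "(expos m x, expos m y) \<in> ?R"
      moreover have "gM m (expos m x, expos m y) = p" unfolding gM_def using u xy by simp
      ultimately show ?thesis unfolding U_def by force
    next
      assume "(expos m y, expos m x) \<in> ?R"
      moreover have "gM m (expos m y, expos m x) = p" unfolding gM_def using u xy by (simp add: insert_commute)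
      ultimately show ?thesis unfolding U_def by force
    qed
  next
    fix p assume "p \<in> U m ?R"
    then obtain a b where "(a,b) \<in> ?R" "p = gM m (a,b)" unfolding U_def by auto
    then show "p \<in> \<sigma>" unfolding gM_def using memR by simp
  qed
qed

lemma ex_U:
  assumes w: "wfM m R"
  shows "ex m (U m R) = exM R"
proof -
  have enc: "encloses m (gM m (c,d)) (gM m (a,b)) \<longleftrightarrow> c < a \<and> b < d" if "(a,b) \<in> R" "(c,d) \<in> R" for a b c d
  proof -
    have r1: "1 \<le> a" "a < b" "b \<le> 2*m" using wfM_range[OF w that(1)] by auto
    have r2: "1 \<le> c" "c < d" "d \<le> 2*m" using wfM_range[OF w that(2)] by auto
    have i1: "expos m ` gM m (a,b) = {a,b}" using gM_img[of a m b] r1 by simp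
    have i2: "expos m ` gM m (c,d) = {c,d}" using gM_img[of c m d] r2 by simp
    show ?thesis unfolding encloses_def i1 i2 using r1 r2 by simp
  qed
  have "{p \<in> U m R. \<not> (\<exists>q\<in>U m R. q \<noteq> p \<and> encloses m q p)} = gM m ` outer R"
  proof (rule equalityI; rule subsetI)
    fix p assume p: "p \<in> {p \<in> U m R. \<not> (\<exists>q\<in>U m R. q \<noteq> p \<and> encloses m q p)}"
    then obtain a b where ab: "(a,b) \<in> R" and pe: "p = gM m (a,b)" unfolding U_def by auto
    have "(a,b) \<in> outer R" unfolding outer_def
    proof (safe)
      show "(a,b) \<in> R" using ab .
    next
      fix c d assume cd: "(c,d) \<in> R" "c < fst (a,b)" "snd (a,b) < d"
      have "gM m (c,d) \<noteq> gM m (a,b)"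
      proof
        assume "gM m (c,d) = gM m (a,b)"
        then show False using gM_inj[of c d m a b] wfM_range[OF w cd(1)] wfM_range[OF w ab] cd by simp
      qed
      moreover have "encloses m (gM m (c,d)) (gM m (a,b))" using enc[OF ab cd(1)] cd by simp
      moreover have "gM m (c,d) \<in> U m R" using cd unfolding U_def by simp
      ultimately show False using p pe by blast
    qed
    then show "p \<in> gM m ` outer R" using pe by simp
  next
    fix p assume "p \<in> gM m ` outer R"
    then obtain a b where ab: "(a,b) \<in> outer R" and pe: "p = gM m (a,b)" by auto
    have abR: "(a,b) \<in> R" using ab unfolding outer_def by simp
    have "\<not> (\<exists>q\<in>U m R. q \<noteq> p \<and> encloses m q p)"
    proof
      assume "\<exists>q\<in>U m R. q \<noteq> p \<and> encloses m q p"
      then obtain c d where cd: "(c,d) \<in> R" "encloses m (gM m (c,d)) p" unfolding U_def by auto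
      then have "c < a \<and> b < d" using enc[OF abR cd(1)] pe by simp
      then show False using ab cd unfolding outer_def by auto
    qed
    moreover have "p \<in> U m R" using abR pe unfolding U_def by simp
    ultimately show "p \<in> {p \<in> U m R. \<not> (\<exists>q\<in>U m R. q \<noteq> p \<and> encloses m q p)}" by simp
  qed
  moreover have "inj_on (gM m) (outer R)" using gM_inj_on[OF w] unfolding outer_def by (rule inj_on_subset) auto
  ultimately show ?thesis unfolding ex_def exM_def by (simp add: card_image)
qed

lemma phi_unexp: "1 \<le> x \<Longrightarrow> x \<le> 2*m \<Longrightarrow> phi (Suc m) (unexp m x) = unexp (Suc m) x"
  unfolding phi_def unexp_def by auto

lemma plus_U:
  assumes w: "wfM m R"
  shows "plus (Suc m) (U m R) = U (Suc m) (plusM m R)"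
proof -
  have "(\<lambda>p. phi (Suc m) ` p) ` U m R = gM (Suc m) ` R"
    unfolding U_def image_image
  proof (rule image_cong[OF refl])
    fix p assume "p \<in> R"
    obtain a b where ab: "p = (a,b)" by (cases p) auto
    have r: "1 \<le> a" "a \<le> 2*m" "1 \<le> b" "b \<le> 2*m" using wfM_range[OF w, of a b] \<open>p \<in> R\<close> ab by auto
    show "phi (Suc m) ` gM m p = gM (Suc m) p"
      unfolding gM_def ab using phi_unexp[of a m] phi_unexp[of b m] r by simp
  qed
  moreover have "gM (Suc m) (2*m+1, 2*m+2) = {2 * Suc m - 1, 0}"
    unfolding gM_def unexp_def by auto
  ultimately show ?thesis unfolding plus_def plusM_def U_def by simp
qed

lemma partner_eq:
  assumes s: "\<sigma> \<in> LP m" and p: "{x,y} \<in> \<sigma>" and ne: "x \<noteq> y"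
  shows "partner \<sigma> x = y"
  unfolding partner_def
proof (rule the_equality)
  show "{x,y} \<in> \<sigma> \<and> y \<noteq> x" using p ne by auto
next
  fix z assume z: "{x,z} \<in> \<sigma> \<and> z \<noteq> x"
  obtain a b where "{x,y} = {a,b}" "a < 2*m" "b < 2*m" using LP_pair[OF s p] by blast
  then have x: "x < 2*m" by (auto simp: doubleton_eq_iff)
  have "{x,z} = {x,y}" using LP_uniq[OF s x _ p] z by blast
  then show "z = y" using z ne by (auto simp: doubleton_eq_iff)
qed


lemma parent_U:
  assumes w: "wfM (Suc m) S"
  shows "parent (Suc m) (U (Suc m) S) = U m (parentM m S)"
proof -
  let ?\<sigma> = "U (Suc m) S"
  let ?\<pi> = "U m (parentM m S)"
  have wP: "wfM m (parentM m S)" using M1[OF w] .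
  have sL: "?\<sigma> \<in> LP (Suc m)" using U_LP[OF w] .
  have pL: "?\<pi> \<in> LP m" using U_LP[OF wP] .
  have i: "2 * Suc m - 1 = 2*m+1" by simp
  have jj: "(2 * Suc m - 1 + 1) mod (2 * Suc m) = 0" by simp
  have gp: "gM (Suc m) (2*m+1, 2*m+2) = {2*m+1, 0}" unfolding gM_def unexp_def by auto
  have pl: "plus (Suc m) ?\<pi> = U (Suc m) (plusM m (parentM m S))" using plus_U[OF wP] .
  have eop: "e_op (Suc m) (2 * Suc m - 1) ?\<sigma> = plus (Suc m) ?\<pi>"
  proof (cases "(2*m+1, 2*m+2) \<in> S")
    case True
    have "{2*m+1, 0} \<in> ?\<sigma>" unfolding U_def using True gp by (metis image_eqI)
    then have "e_op (Suc m) (2 * Suc m - 1) ?\<sigma> = ?\<sigma>" unfolding e_op_def Let_def jj i by simp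
    moreover have "plusM m (parentM m S) = S" using parentM_in[OF w True] True unfolding plusM_def by auto
    ultimately show ?thesis using pl by simp
  next
    case False
    have nin: "{2*m+1, 0} \<notin> ?\<sigma>"
    proof
      assume "{2*m+1, 0} \<in> ?\<sigma>"
      then obtain c d where cd: "(c,d) \<in> S" "gM (Suc m) (c,d) = {2*m+1, 0}" unfolding U_def by auto
      have "c = 2*m+1 \<and> d = 2*m+2"
        using gM_inj[of c d "Suc m" "2*m+1" "2*m+2"] wfM_range[OF w cd(1)] cd(2) gp by simp
      then show False using False cd by simp
    qed
    obtain a b where a: "(a, 2*m+1) \<in> S" and b: "(b, 2*m+2) \<in> S" and ba: "b < a" and a2: "a \<le> 2*m" and b1: "1 \<le> b"
      using last_pairs[OF w False] by blast
    have c1: "{a, 2*m+1} = {2*m+1, a}" by (rule insert_commute)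
    have c2: "{b, 0} = {0, b}" by (rule insert_commute)
    have c3: "{b, a} = {a, b}" by (rule insert_commute)
    have ga0: "gM (Suc m) (a, 2*m+1) = {a, 2*m+1}" unfolding gM_def unexp_def using a2 by simp
    have gb0: "gM (Suc m) (b, 2*m+2) = {b, 0}" unfolding gM_def unexp_def using ba a2 by simp
    have gba0: "gM (Suc m) (b, a) = {b, a}" unfolding gM_def unexp_def using ba a2 by simp
    have ga: "gM (Suc m) (a, 2*m+1) = {2*m+1, a}" using ga0 c1 by simp
    have gb: "gM (Suc m) (b, 2*m+2) = {0, b}" using gb0 c2 by simp
    have gba: "gM (Suc m) (b, a) = {a, b}" using gba0 c3 by simp
    have aS: "{2*m+1, a} \<in> ?\<sigma>" unfolding U_def using a ga by (metis image_eqI)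
    have bS: "{0, b} \<in> ?\<sigma>" unfolding U_def using b gb by (metis image_eqI)
    have pa: "partner ?\<sigma> (2*m+1) = a" using partner_eq[OF sL aS] a2 by simp
    have pb: "partner ?\<sigma> 0 = b" using partner_eq[OF sL bS] b1 by simp
    have e1: "e_op (Suc m) (2 * Suc m - 1) ?\<sigma> = (?\<sigma> - {{2*m+1, a}, {0, b}}) \<union> {{2*m+1, 0}, {a, b}}"
      unfolding e_op_def Let_def jj i using nin pa pb by simp
    have pe: "parentM m S = (S - {(a, 2*m+1), (b, 2*m+2)}) \<union> {(b, a)}" using parentM_eq[OF w False a b] .
    have injS: "inj_on (gM (Suc m)) S" using gM_inj_on[OF w] .
    have "gM (Suc m) ` (S - {(a, 2*m+1), (b, 2*m+2)}) = gM (Suc m) ` S - gM (Suc m) ` {(a, 2*m+1), (b, 2*m+2)}"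
      by (rule inj_on_image_set_diff[OF injS]) (use a b in auto)
    then have "U (Suc m) (plusM m (parentM m S)) = insert {2*m+1, 0} ((?\<sigma> - {{2*m+1, a}, {0, b}}) \<union> {{a, b}})"
      unfolding plusM_def pe U_def using ga gb gba gp by simp
    then show ?thesis using e1 pl by auto
  qed
  show ?thesis unfolding parent_def
  proof (rule the_equality)
    show "?\<pi> \<in> LP (Suc m - 1) \<and> e_op (Suc m) (2 * Suc m - 1) ?\<sigma> = plus (Suc m) ?\<pi>" using pL eop by simp
  next
    fix \<pi> assume h: "\<pi> \<in> LP (Suc m - 1) \<and> e_op (Suc m) (2 * Suc m - 1) ?\<sigma> = plus (Suc m) \<pi>"
    then have piL: "\<pi> \<in> LP m" by simp
    define R' where "R' = Tinv m \<pi>"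
    have wR': "wfM m R'" and pe: "\<pi> = U m R'" using LP_U_surj[OF piL] R'_def by auto
    have "U (Suc m) (plusM m R') = U (Suc m) (plusM m (parentM m S))"
      using h eop plus_U[OF wR'] pl pe by simp
    then have "plusM m R' = plusM m (parentM m S)" using U_inj[OF M2(1)[OF wR'] M2(1)[OF wP]] by simp
    then have "R' = parentM m S" using M2(2)[OF wR'] M2(2)[OF wP] by metis
    then show "\<pi> = ?\<pi>" using pe by simp
  qed
qed


lemma LPU: "\<sigma> \<in> LP k \<Longrightarrow> \<exists>R. wfM k R \<and> \<sigma> = U k R"
  using LP_U_surj by blast

lemma U_plus_iff:
  assumes w: "wfM (Suc m) S"
  shows "U (Suc m) S = plus (Suc m) (parent (Suc m) (U (Suc m) S)) \<longleftrightarrow> (2*m+1, 2*m+2) \<in> S"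
proof -
  have wP: "wfM m (parentM m S)" using M1[OF w] .
  have e: "plus (Suc m) (parent (Suc m) (U (Suc m) S)) = U (Suc m) (plusM m (parentM m S))"
    using parent_U[OF w] plus_U[OF wP] by simp
  show ?thesis
  proof
    assume "U (Suc m) S = plus (Suc m) (parent (Suc m) (U (Suc m) S))"
    then have "U (Suc m) S = U (Suc m) (plusM m (parentM m S))" using e by (rule trans)
    then have "S = plusM m (parentM m S)" using U_inj[OF w M2(1)[OF wP]] by blast
    then show "(2*m+1, 2*m+2) \<in> S" unfolding plusM_def by (metis insertI1)
  next
    assume p: "(2*m+1, 2*m+2) \<in> S"
    have "plusM m (parentM m S) = S" using parentM_in[OF w p] p unfolding plusM_def by auto
    then show "U (Suc m) S = plus (Suc m) (parent (Suc m) (U (Suc m) S))" using e by simp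
  qed
qed

lemma L1:
  assumes p: "\<pi> \<in> LP m"
  shows "plus (Suc m) \<pi> \<in> LP (Suc m)" "parent (Suc m) (plus (Suc m) \<pi>) = \<pi>"
    "ex (Suc m) (plus (Suc m) \<pi>) = Suc (ex m \<pi>)"
proof -
  obtain R where w: "wfM m R" and pe: "\<pi> = U m R" using LPU[OF p] by blast
  have e: "plus (Suc m) \<pi> = U (Suc m) (plusM m R)" using plus_U[OF w] pe by simp
  show "plus (Suc m) \<pi> \<in> LP (Suc m)" using e U_LP[OF M2(1)[OF w]] by simp
  show "parent (Suc m) (plus (Suc m) \<pi>) = \<pi>" using e parent_U[OF M2(1)[OF w]] M2(2)[OF w] pe by simp
  show "ex (Suc m) (plus (Suc m) \<pi>) = Suc (ex m \<pi>)"
    using e ex_U[OF M2(1)[OF w]] M2(3)[OF w] ex_U[OF w] pe by simp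
qed

lemma L2:
  assumes s: "\<sigma> \<in> LP (Suc m)"
  shows "parent (Suc m) \<sigma> \<in> LP m"
proof -
  obtain S where w: "wfM (Suc m) S" and se: "\<sigma> = U (Suc m) S" using LPU[OF s] by blast
  show ?thesis using parent_U[OF w] U_LP[OF M1[OF w]] se by simp
qed

lemma L3:
  assumes s: "\<sigma> \<in> LP (Suc m)" and np: "\<sigma> \<noteq> plus (Suc m) (parent (Suc m) \<sigma>)"
  shows "ex (Suc m) \<sigma> \<le> ex m (parent (Suc m) \<sigma>)"
proof -
  obtain S where w: "wfM (Suc m) S" and se: "\<sigma> = U (Suc m) S" using LPU[OF s] by blast
  have "(2*m+1, 2*m+2) \<notin> S" using U_plus_iff[OF w] np se by simp
  then show ?thesis using M3[OF w] ex_U[OF w] ex_U[OF M1[OF w]] parent_U[OF w] se by simp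
qed

lemma ex_pos:
  assumes s: "\<sigma> \<in> LP (Suc m)"
  shows "1 \<le> ex (Suc m) \<sigma>"
proof -
  obtain S where w: "wfM (Suc m) S" and se: "\<sigma> = U (Suc m) S" using LPU[OF s] by blast
  show ?thesis
  proof (cases "(2*m+1, 2*m+2) \<in> S")
    case True
    have "plusM m (parentM m S) = S" using parentM_in[OF w True] True unfolding plusM_def by auto
    then have "exM S = Suc (exM (parentM m S))" using M2(3)[OF M1[OF w]] by simp
    then show ?thesis using ex_U[OF w] se by simp
  next
    case False
    obtain a b where a: "(a, 2*m+1) \<in> S" and b: "(b, 2*m+2) \<in> S" and ba: "b < a"
      using last_pairs[OF w False] by blast
    show ?thesis using exM_S[OF w False a b ba] ex_U[OF w] se by simp
  qed
qed

lemma L4: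
  assumes s1: "\<sigma>1 \<in> LP (Suc m)" and np1: "\<sigma>1 \<noteq> plus (Suc m) (parent (Suc m) \<sigma>1)"
    and s2: "\<sigma>2 \<in> LP (Suc m)" and np2: "\<sigma>2 \<noteq> plus (Suc m) (parent (Suc m) \<sigma>2)"
    and pe: "parent (Suc m) \<sigma>1 = parent (Suc m) \<sigma>2" and ee: "ex (Suc m) \<sigma>1 = ex (Suc m) \<sigma>2"
  shows "\<sigma>1 = \<sigma>2"
proof -
  obtain S1 where w1: "wfM (Suc m) S1" and se1: "\<sigma>1 = U (Suc m) S1" using LPU[OF s1] by blast
  obtain S2 where w2: "wfM (Suc m) S2" and se2: "\<sigma>2 = U (Suc m) S2" using LPU[OF s2] by blast
  have n1: "(2*m+1, 2*m+2) \<notin> S1" using U_plus_iff[OF w1] np1 se1 by simp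
  have n2: "(2*m+1, 2*m+2) \<notin> S2" using U_plus_iff[OF w2] np2 se2 by simp
  have "U m (parentM m S1) = U m (parentM m S2)" using pe parent_U[OF w1] parent_U[OF w2] se1 se2 by simp
  then have pp: "parentM m S1 = parentM m S2" using U_inj[OF M1[OF w1] M1[OF w2]] by simp
  have "exM S1 = exM S2" using ee ex_U[OF w1] ex_U[OF w2] se1 se2 by simp
  then have "S1 = S2" using M4[OF w1 n1 w2 n2 pp] by simp
  then show ?thesis using se1 se2 by simp
qed

lemma L5:
  assumes p: "\<pi> \<in> LP m" and j1: "1 \<le> j" and j2: "j \<le> ex m \<pi>"
  shows "\<exists>\<sigma>\<in>LP (Suc m). \<sigma> \<noteq> plus (Suc m) (parent (Suc m) \<sigma>) \<and> parent (Suc m) \<sigma> = \<pi> \<and> ex (Suc m) \<sigma> = j"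
proof -
  obtain R where w: "wfM m R" and pe: "\<pi> = U m R" using LPU[OF p] by blast
  obtain S where wS: "wfM (Suc m) S" and np: "(2*m+1, 2*m+2) \<notin> S" and pS: "parentM m S = R" and eS: "exM S = j"
    using M5[OF w j1] j2 ex_U[OF w] pe by auto
  have "U (Suc m) S \<in> LP (Suc m)" using U_LP[OF wS] .
  moreover have "U (Suc m) S \<noteq> plus (Suc m) (parent (Suc m) (U (Suc m) S))" using U_plus_iff[OF wS] np by simp
  moreover have "parent (Suc m) (U (Suc m) S) = \<pi>" using parent_U[OF wS] pS pe by simp
  moreover have "ex (Suc m) (U (Suc m) S) = j" using ex_U[OF wS] eS by simp
  ultimately show ?thesis by blast
qed

lemma anc_shift: "anc (Suc m) (Suc k) \<sigma> = anc m k (parent (Suc m) \<sigma>)"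
proof (induction k)
  case 0 then show ?case by simp
next
  case (Suc k)
  have "anc (Suc m) (Suc (Suc k)) \<sigma> = parent (Suc m - Suc k) (anc (Suc m) (Suc k) \<sigma>)" by simp
  also have "\<dots> = parent (m - k) (anc m k (parent (Suc m) \<sigma>))" using Suc.IH by simp
  also have "\<dots> = anc m (Suc k) (parent (Suc m) \<sigma>)" by simp
  finally show ?case .
qed

lemma sigma_at_shift: "j \<le> m \<Longrightarrow> sigma_at (Suc m) \<sigma> j = sigma_at m (parent (Suc m) \<sigma>) j"
  unfolding sigma_at_def using anc_shift[of m "m - j" \<sigma>] by (simp add: Suc_diff_le)

lemma interaction_rec:
  assumes m1: "1 \<le> m"
  shows "interaction (Suc m) \<sigma> = interaction m (parent (Suc m) \<sigma>) + (if \<sigma> = plus (Suc m) (parent (Suc m) \<sigma>) then 0 else 1)"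
proof -
  let ?p = "parent (Suc m) \<sigma>"
  define P where "P = (\<lambda>j. sigma_at (Suc m) \<sigma> j \<noteq> plus j (sigma_at (Suc m) \<sigma> (j - 1)))"
  let ?A = "{j \<in> {2..m}. sigma_at m ?p j \<noteq> plus j (sigma_at m ?p (j - 1))}"
  have split: "{2..Suc m} = {2..m} \<union> {Suc m}" using m1 by auto
  have top: "sigma_at (Suc m) \<sigma> (Suc m) = \<sigma>" unfolding sigma_at_def by simp
  have top1: "sigma_at (Suc m) \<sigma> m = ?p" unfolding sigma_at_def by simp
  have eqv: "P j = (sigma_at m ?p j \<noteq> plus j (sigma_at m ?p (j - 1)))"
    if "j \<in> {2..m}" for j
  proof -
    have h1: "sigma_at (Suc m) \<sigma> j = sigma_at m ?p j" using sigma_at_shift[of j m \<sigma>] that by simp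
    have jm: "j - 1 \<le> m" using that by auto
    have h2: "sigma_at (Suc m) \<sigma> (j-1) = sigma_at m ?p (j-1)" using sigma_at_shift[OF jm] .
    show ?thesis unfolding P_def h1 h2 ..
  qed
  have s1: "{j \<in> {2..m}. P j} = ?A" using eqv by blast
  have pt: "P (Suc m) = (\<sigma> \<noteq> plus (Suc m) ?p)" unfolding P_def top using top1 by simp
  have s2: "{j \<in> {Suc m}. P j} = (if \<sigma> = plus (Suc m) ?p then {} else {Suc m})" using pt by auto
  have "{j \<in> {2..Suc m}. P j} = {j \<in> {2..m}. P j} \<union> {j \<in> {Suc m}. P j}" unfolding split by blast
  also have "\<dots> = ?A \<union> (if \<sigma> = plus (Suc m) ?p then {} else {Suc m})" using s1 s2 by simp
  finally have e: "{j \<in> {2..Suc m}. P j} = ?A \<union> (if \<sigma> = plus (Suc m) ?p then {} else {Suc m})" .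
  have fA: "finite ?A" by simp
  have nA: "Suc m \<notin> ?A" by simp
  have "card (?A \<union> (if \<sigma> = plus (Suc m) ?p then {} else {Suc m})) = card ?A + (if \<sigma> = plus (Suc m) ?p then 0 else 1)"
    using fA nA by (cases "\<sigma> = plus (Suc m) ?p") simp_all
  then show ?thesis unfolding interaction_def using e unfolding P_def by simp
qed

lemma LP_finite: "finite (LP m)"
proof -
  have "LP m \<subseteq> Pow (Pow {..<2*m})"
  proof
    fix \<sigma> assume s: "\<sigma> \<in> LP m"
    have "p \<subseteq> {..<2*m}" if "p \<in> \<sigma>" for p using LP_pair[OF s that] by auto
    then show "\<sigma> \<in> Pow (Pow {..<2*m})" by auto
  qed
  then show ?thesis by (rule finite_subset) simp
qed

lemma rec_main:
  assumes m1: "1 \<le> m" and j1: "1 \<le> j"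
  shows "card {\<sigma> \<in> LP (Suc m). ex (Suc m) \<sigma> = j \<and> interaction (Suc m) \<sigma> \<in> L}
    = card {\<pi> \<in> LP m. Suc (ex m \<pi>) = j \<and> interaction m \<pi> \<in> L}
      + card {\<pi> \<in> LP m. j \<le> ex m \<pi> \<and> Suc (interaction m \<pi>) \<in> L}"
proof -
  let ?A = "{\<sigma> \<in> LP (Suc m). ex (Suc m) \<sigma> = j \<and> interaction (Suc m) \<sigma> \<in> L}"
  let ?A1 = "{\<sigma> \<in> ?A. \<sigma> = plus (Suc m) (parent (Suc m) \<sigma>)}"
  let ?A2 = "{\<sigma> \<in> ?A. \<sigma> \<noteq> plus (Suc m) (parent (Suc m) \<sigma>)}"
  let ?B1 = "{\<pi> \<in> LP m. Suc (ex m \<pi>) = j \<and> interaction m \<pi> \<in> L}"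
  let ?B2 = "{\<pi> \<in> LP m. j \<le> ex m \<pi> \<and> Suc (interaction m \<pi>) \<in> L}"
  have fA: "finite ?A" using LP_finite by simp
  have "?A = ?A1 \<union> ?A2" by auto
  moreover have "?A1 \<inter> ?A2 = {}" by auto
  ultimately have cA: "card ?A = card ?A1 + card ?A2"
    using fA card_Un_disjoint[of ?A1 ?A2] by (metis (no_types, lifting) finite_Un)
  have A1: "?A1 = plus (Suc m) ` ?B1"
  proof (rule equalityI; rule subsetI)
    fix \<sigma> assume s: "\<sigma> \<in> ?A1"
    then have sL: "\<sigma> \<in> LP (Suc m)" and eq: "\<sigma> = plus (Suc m) (parent (Suc m) \<sigma>)" by auto
    let ?p = "parent (Suc m) \<sigma>"
    have pL: "?p \<in> LP m" using L2[OF sL] .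
    have "ex (Suc m) (plus (Suc m) ?p) = Suc (ex m ?p)" using L1(3)[OF pL] .
    moreover have "ex (Suc m) \<sigma> = ex (Suc m) (plus (Suc m) ?p)" using eq by (rule arg_cong)
    ultimately have "ex (Suc m) \<sigma> = Suc (ex m ?p)" by simp
    moreover have "interaction (Suc m) \<sigma> = interaction m ?p + (if \<sigma> = plus (Suc m) ?p then 0 else 1)"
      using interaction_rec[OF m1, of \<sigma>] .
    then have "interaction (Suc m) \<sigma> = interaction m ?p" using eq by presburger
    ultimately have "?p \<in> ?B1" using s pL by auto
    then show "\<sigma> \<in> plus (Suc m) ` ?B1" using eq by blast
  next
    fix \<sigma> assume "\<sigma> \<in> plus (Suc m) ` ?B1"
    then obtain \<pi> where b: "\<pi> \<in> ?B1" and se: "\<sigma> = plus (Suc m) \<pi>" by blast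
    have pL: "\<pi> \<in> LP m" using b by simp
    have par: "parent (Suc m) \<sigma> = \<pi>" using L1(2)[OF pL] se by simp
    have "interaction (Suc m) \<sigma> = interaction m \<pi>" using interaction_rec[OF m1, of \<sigma>] par se by simp
    then show "\<sigma> \<in> ?A1" using L1(1,3)[OF pL] b se par by auto
  qed
  have inj1: "inj_on (plus (Suc m)) ?B1"
  proof (rule inj_onI)
    fix x y assume "x \<in> ?B1" "y \<in> ?B1" "plus (Suc m) x = plus (Suc m) y"
    then show "x = y" using L1(2)[of x m] L1(2)[of y m] by (metis (no_types, lifting) mem_Collect_eq)
  qed
  have c1: "card ?A1 = card ?B1" using A1 card_image[OF inj1] by simp
  have bij2: "bij_betw (parent (Suc m)) ?A2 ?B2"
  proof (rule bij_betw_imageI)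
    show "inj_on (parent (Suc m)) ?A2"
    proof (rule inj_onI)
      fix x y assume x: "x \<in> ?A2" and y: "y \<in> ?A2" and e: "parent (Suc m) x = parent (Suc m) y"
      show "x = y" using L4[of x m y] x y e by auto
    qed
  next
    show "parent (Suc m) ` ?A2 = ?B2"
    proof (rule equalityI; rule subsetI)
      fix \<pi> assume "\<pi> \<in> parent (Suc m) ` ?A2"
      then obtain \<sigma> where s: "\<sigma> \<in> ?A2" and pe: "\<pi> = parent (Suc m) \<sigma>" by blast
      have sL: "\<sigma> \<in> LP (Suc m)" and np: "\<sigma> \<noteq> plus (Suc m) (parent (Suc m) \<sigma>)" using s by auto
      have "interaction (Suc m) \<sigma> = Suc (interaction m \<pi>)" using interaction_rec[OF m1, of \<sigma>] np pe by simp
      then show "\<pi> \<in> ?B2" using L2[OF sL] L3[OF sL np] s pe by auto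
    next
      fix \<pi> assume b: "\<pi> \<in> ?B2"
      then have pL: "\<pi> \<in> LP m" and j2: "j \<le> ex m \<pi>" by auto
      obtain \<sigma> where sL: "\<sigma> \<in> LP (Suc m)" and np: "\<sigma> \<noteq> plus (Suc m) (parent (Suc m) \<sigma>)"
        and pe: "parent (Suc m) \<sigma> = \<pi>" and ee: "ex (Suc m) \<sigma> = j" using L5[OF pL j1 j2] by blast
      have "interaction (Suc m) \<sigma> = Suc (interaction m \<pi>)" using interaction_rec[OF m1, of \<sigma>] np pe by simp
      then have "\<sigma> \<in> ?A2" using sL np ee b by auto
      then show "\<pi> \<in> parent (Suc m) ` ?A2" using pe by blast
    qed
  qed
  have c2: "card ?A2 = card ?B2" using bij_betw_same_card[OF bij2] .
  show ?thesis using cA c1 c2 by simp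
qed


lemma card_fibers:
  assumes fA: "finite A" and fK: "finite K" and f: "\<And>x. x \<in> A \<Longrightarrow> f x \<in> K"
  shows "card A = (\<Sum>k\<in>K. card {x\<in>A. f x = k})"
proof -
  have "A = (\<Union>k\<in>K. {x\<in>A. f x = k})" using f by auto
  moreover have "card (\<Union>k\<in>K. {x\<in>A. f x = k}) = (\<Sum>k\<in>K. card {x\<in>A. f x = k})"
    by (rule card_UN_disjoint) (use fK fA in auto)
  ultimately show ?thesis by simp
qed

lemma LP1: "LP 1 = {{{0,1}}}"
proof (rule equalityI; rule subsetI)
  fix \<sigma> assume s: "\<sigma> \<in> LP 1"
  have all: "p = {0,1}" if pin: "p \<in> \<sigma>" for p
  proof -
    obtain a b where "p = {a,b}" "a \<noteq> b" "a < 2" "b < 2" using LP_pair[OF s pin] by auto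
    then show ?thesis by (cases a; cases b) auto
  qed
  obtain p where "p \<in> \<sigma>" "(0::nat) \<in> p" using LP_ex[OF s, of 0] by auto
  then have "{0,1} \<in> \<sigma>" using all by blast
  then have "\<sigma> = {{0,1}}" using all by blast
  then show "\<sigma> \<in> {{{0,1}}}" by simp
next
  fix \<sigma> assume "\<sigma> \<in> {{{0::nat,1}}}"
  then have se: "\<sigma> = {{0,1}}" by simp
  show "\<sigma> \<in> LP 1" unfolding se
  proof (rule LP_I)
    fix p assume "p \<in> {{0::nat,1}}" then have "p = {0,1}" by simp
    then show "\<exists>a b. p = {a, b} \<and> a \<noteq> b \<and> a < 2 * 1 \<and> b < 2 * 1" by (intro exI[of _ 0] exI[of _ 1]) simp
  next
    fix x :: nat assume "x < 2*1" then have "x = 0 \<or> x = 1" by linarith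
    then show "\<exists>p\<in>{{0,1}}. x \<in> p" by blast
  next
    fix x p q assume "p \<in> {{0::nat,1}}" "q \<in> {{0::nat,1}}" then show "p = q" by simp
  next
    fix a b c d :: nat assume h: "{a,b} \<in> {{0,1}}" "{c,d} \<in> {{0,1}}" "a < c" "c < b" "b < d"
    then have "a \<in> {0,1}" "b \<in> {0,1}" "c \<in> {0,1}" by (auto simp: doubleton_eq_iff)
    then show False using h(3,4) by auto
  qed
qed

lemma ex1: "ex 1 {{0,1}} = 1"
proof -
  have g: "{p \<in> {A}. \<not> (\<exists>q\<in>{A}. q \<noteq> p \<and> P q p)} = {A}" for A :: "nat set" and P by blast
  show ?thesis unfolding ex_def g by simp
qed

lemma int1: "interaction 1 \<sigma> = 0"
  unfolding interaction_def by simp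

lemma Fc_l0: "1 \<le> m \<Longrightarrow> 1 \<le> k \<Longrightarrow> Fc (Suc m) k 0 = Fc m (k-1) 0"
  unfolding Fc_def by auto

lemma ex_le_from:
  assumes IH: "\<And>k l. real (card {\<sigma> \<in> LP m. ex m \<sigma> = k \<and> interaction m \<sigma> = l}) = Fc m k l"
    and p: "\<pi> \<in> LP m"
  shows "ex m \<pi> \<le> m"
proof (rule ccontr)
  assume "\<not> ex m \<pi> \<le> m"
  then have "Fc m (ex m \<pi>) (interaction m \<pi>) = 0" by (simp add: Fc_zero)
  then have "real (card {\<sigma> \<in> LP m. ex m \<sigma> = ex m \<pi> \<and> interaction m \<sigma> = interaction m \<pi>}) = 0"
    using IH[of "ex m \<pi>" "interaction m \<pi>"] by simp
  then have "card {\<sigma> \<in> LP m. ex m \<sigma> = ex m \<pi> \<and> interaction m \<sigma> = interaction m \<pi>} = 0" by simp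
  moreover have "finite {\<sigma> \<in> LP m. ex m \<sigma> = ex m \<pi> \<and> interaction m \<sigma> = interaction m \<pi>}" using LP_finite by simp
  ultimately have "{\<sigma> \<in> LP m. ex m \<sigma> = ex m \<pi> \<and> interaction m \<sigma> = interaction m \<pi>} = {}" by (simp only: card_0_eq)
  moreover have "\<pi> \<in> {\<sigma> \<in> LP m. ex m \<sigma> = ex m \<pi> \<and> interaction m \<sigma> = interaction m \<pi>}" using p by simp
  ultimately show False by blast
qed

lemma cnt_Fc:
  assumes "1 \<le> n"
  shows "real (card {\<sigma> \<in> LP n. ex n \<sigma> = k \<and> interaction n \<sigma> = l}) = Fc n k l"
  using assms
proof (induction n arbitrary: k l rule: nat_induct_at_least)
  case base
  have "{\<sigma> \<in> LP 1. ex 1 \<sigma> = k \<and> interaction 1 \<sigma> = l} = (if k = 1 \<and> l = 0 then {{{0,1}}} else {})"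
    unfolding LP1 using ex1 int1 by auto
  then show ?case unfolding Fc_def by auto
next
  case (Suc m)
  note IH = Suc.IH
  have m1: "1 \<le> m" using Suc.hyps .
  have exle: "\<And>\<pi>. \<pi> \<in> LP m \<Longrightarrow> ex m \<pi> \<le> m" using ex_le_from[OF IH] by blast
  show ?case
  proof (cases "k = 0")
    case True
    have e: "{\<sigma> \<in> LP (Suc m). ex (Suc m) \<sigma> = k \<and> interaction (Suc m) \<sigma> = l} = {}"
      using ex_pos True by fastforce
    show ?thesis unfolding e using True by (simp add: Fc_zero)
  next
    case False
    then have k1: "1 \<le> k" by simp
    have r: "card {\<sigma> \<in> LP (Suc m). ex (Suc m) \<sigma> = k \<and> interaction (Suc m) \<sigma> \<in> {l}}
      = card {\<pi> \<in> LP m. Suc (ex m \<pi>) = k \<and> interaction m \<pi> \<in> {l}}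
      + card {\<pi> \<in> LP m. k \<le> ex m \<pi> \<and> Suc (interaction m \<pi>) \<in> {l}}"
      by (rule rec_main[OF m1 k1])
    have s1: "{\<pi> \<in> LP m. Suc (ex m \<pi>) = k \<and> interaction m \<pi> \<in> {l}} = {\<pi> \<in> LP m. ex m \<pi> = k - 1 \<and> interaction m \<pi> = l}"
      using k1 by auto
    have lhs: "{\<sigma> \<in> LP (Suc m). ex (Suc m) \<sigma> = k \<and> interaction (Suc m) \<sigma> \<in> {l}} = {\<sigma> \<in> LP (Suc m). ex (Suc m) \<sigma> = k \<and> interaction (Suc m) \<sigma> = l}"
      by simp
    show ?thesis
    proof (cases l)
      case 0
      have e2: "card {\<pi> \<in> LP m. k \<le> ex m \<pi> \<and> Suc (interaction m \<pi>) \<in> {l}} = 0" using 0 by simp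
      have "card {\<sigma> \<in> LP (Suc m). ex (Suc m) \<sigma> = k \<and> interaction (Suc m) \<sigma> = l} = card {\<pi> \<in> LP m. ex m \<pi> = k - 1 \<and> interaction m \<pi> = l}"
        using r unfolding s1 lhs e2 by simp
      then show ?thesis using IH[of "k-1" l] Fc_l0[OF m1 k1] 0 by simp
    next
      case (Suc l')
      have s2: "{\<pi> \<in> LP m. k \<le> ex m \<pi> \<and> Suc (interaction m \<pi>) \<in> {l}} = {\<pi> \<in> LP m. k \<le> ex m \<pi> \<and> interaction m \<pi> = l'}"
        using Suc by auto
      have "card {\<pi> \<in> LP m. k \<le> ex m \<pi> \<and> interaction m \<pi> = l'}
          = (\<Sum>i\<in>{k..m}. card {\<pi> \<in> {\<pi> \<in> LP m. k \<le> ex m \<pi> \<and> interaction m \<pi> = l'}. ex m \<pi> = i})"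
        by (rule card_fibers) (use LP_finite exle in auto)
      also have "\<dots> = (\<Sum>i\<in>{k..m}. card {\<pi> \<in> LP m. ex m \<pi> = i \<and> interaction m \<pi> = l'})"
        by (rule sum.cong[OF refl]) (rule arg_cong[where f=card], auto)
      finally have c2: "card {\<pi> \<in> LP m. k \<le> ex m \<pi> \<and> interaction m \<pi> = l'} = (\<Sum>i\<in>{k..m}. card {\<pi> \<in> LP m. ex m \<pi> = i \<and> interaction m \<pi> = l'})" .
      have "real (card {\<sigma> \<in> LP (Suc m). ex (Suc m) \<sigma> = k \<and> interaction (Suc m) \<sigma> = l})
          = Fc m (k-1) l + (\<Sum>i\<in>{k..m}. Fc m i l')"
        using r s1 s2 lhs c2 IH by simp
      also have "\<dots> = Fc (Suc m) k l"
      proof (cases "k \<le> m + 1")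
        case True
        show ?thesis using Fc_tail[OF m1 k1 True, of l'] Suc by simp
      next
        case False
        then show ?thesis by (simp add: Fc_zero)
      qed
      finally show ?thesis .
    qed
  qed
qed

lemma ex_le_from_B:
  assumes IH: "\<And>k. real (card {\<sigma> \<in> LP m. ex m \<sigma> = k}) = Bc m k"
    and p: "\<pi> \<in> LP m"
  shows "ex m \<pi> \<le> m"
proof (rule ccontr)
  assume "\<not> ex m \<pi> \<le> m"
  then have "Bc m (ex m \<pi>) = 0" unfolding Bc_def by simp
  then have "real (card {\<sigma> \<in> LP m. ex m \<sigma> = ex m \<pi>}) = 0" using IH[of "ex m \<pi>"] by simp
  then have "card {\<sigma> \<in> LP m. ex m \<sigma> = ex m \<pi>} = 0" by simp
  moreover have "finite {\<sigma> \<in> LP m. ex m \<sigma> = ex m \<pi>}" using LP_finite by simp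
  ultimately have "{\<sigma> \<in> LP m. ex m \<sigma> = ex m \<pi>} = {}" by (simp only: card_0_eq)
  moreover have "\<pi> \<in> {\<sigma> \<in> LP m. ex m \<sigma> = ex m \<pi>}" using p by simp
  ultimately show False by blast
qed

lemma cnt_Bc:
  assumes "1 \<le> n"
  shows "real (card {\<sigma> \<in> LP n. ex n \<sigma> = k}) = Bc n k"
  using assms
proof (induction n arbitrary: k rule: nat_induct_at_least)
  case base
  have "{\<sigma> \<in> LP 1. ex 1 \<sigma> = k} = (if k = 1 then {{{0,1}}} else {})"
    unfolding LP1 using ex1 by auto
  then show ?case unfolding Bc_def by auto
next
  case (Suc m)
  note IH = Suc.IH
  have m1: "1 \<le> m" using Suc.hyps .
  have exle: "\<And>\<pi>. \<pi> \<in> LP m \<Longrightarrow> ex m \<pi> \<le> m" using ex_le_from_B[OF IH] by blast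
  show ?case
  proof (cases "k = 0")
    case True
    have e: "{\<sigma> \<in> LP (Suc m). ex (Suc m) \<sigma> = k} = {}"
      using ex_pos True by fastforce
    show ?thesis unfolding e using True by (simp add: Bc_def)
  next
    case False
    then have k1: "1 \<le> k" by simp
    have r: "card {\<sigma> \<in> LP (Suc m). ex (Suc m) \<sigma> = k \<and> interaction (Suc m) \<sigma> \<in> UNIV}
      = card {\<pi> \<in> LP m. Suc (ex m \<pi>) = k \<and> interaction m \<pi> \<in> UNIV}
      + card {\<pi> \<in> LP m. k \<le> ex m \<pi> \<and> Suc (interaction m \<pi>) \<in> UNIV}"
      by (rule rec_main[OF m1 k1])
    have s1: "{\<pi> \<in> LP m. Suc (ex m \<pi>) = k \<and> interaction m \<pi> \<in> UNIV} = {\<pi> \<in> LP m. ex m \<pi> = k - 1}"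
      using k1 by auto
    have "card {\<pi> \<in> LP m. k \<le> ex m \<pi>}
        = (\<Sum>i\<in>{k..m}. card {\<pi> \<in> {\<pi> \<in> LP m. k \<le> ex m \<pi>}. ex m \<pi> = i})"
      by (rule card_fibers) (use LP_finite exle in auto)
    also have "\<dots> = (\<Sum>i\<in>{k..m}. card {\<pi> \<in> LP m. ex m \<pi> = i})"
      by (rule sum.cong[OF refl]) (rule arg_cong[where f=card], auto)
    finally have c2: "card {\<pi> \<in> LP m. k \<le> ex m \<pi>} = (\<Sum>i\<in>{k..m}. card {\<pi> \<in> LP m. ex m \<pi> = i})" .
    have "real (card {\<sigma> \<in> LP (Suc m). ex (Suc m) \<sigma> = k}) = Bc m (k-1) + (\<Sum>i\<in>{k..m}. Bc m i)"
      using r s1 c2 IH by simp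
    also have "\<dots> = Bc (Suc m) k"
    proof (cases "k \<le> m + 1")
      case True
      show ?thesis using Bc_tail[OF m1 k1 True] by simp
    next
      case False
      then show ?thesis by (simp add: Bc_def)
    qed
    finally show ?thesis .
  qed
qed

theorem mainTheorem4:
  fixes n :: nat
  assumes "n \<ge> 1"
  shows "real (card (LP n)) = (1 / (real n + 1)) * real ((2*n) choose n) \<and>
         (\<forall>k. 1 \<le> k \<and> k \<le> n \<longrightarrow>
           real (card {\<sigma> \<in> LP n. ex n \<sigma> = k})
             = real ((2*n - k) choose n) * real k / real (2*n - k)) \<and>
         (\<forall>l. l \<le> n - 1 \<longrightarrow>
           real (card {\<sigma> \<in> LP n. interaction n \<sigma> = l})
             = (1 / real n) * real (n choose (l + 1)) * real (n choose l))"
proof (intro conjI allI impI)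
  have r: "card {\<sigma> \<in> LP (Suc n). ex (Suc n) \<sigma> = 1 \<and> interaction (Suc n) \<sigma> \<in> UNIV}
      = card {\<pi> \<in> LP n. Suc (ex n \<pi>) = 1 \<and> interaction n \<pi> \<in> UNIV}
      + card {\<pi> \<in> LP n. 1 \<le> ex n \<pi> \<and> Suc (interaction n \<pi>) \<in> UNIV}"
    by (rule rec_main[OF assms]) simp
  have "card (LP n) = card {\<pi> \<in> LP n. Suc (ex n \<pi>) = 1 \<and> interaction n \<pi> \<in> UNIV}
      + card {\<pi> \<in> LP n. 1 \<le> ex n \<pi> \<and> Suc (interaction n \<pi>) \<in> UNIV}"
  proof -
    have "LP n = {\<pi> \<in> LP n. Suc (ex n \<pi>) = 1 \<and> interaction n \<pi> \<in> UNIV} \<union> {\<pi> \<in> LP n. 1 \<le> ex n \<pi> \<and> Suc (interaction n \<pi>) \<in> UNIV}"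
      by auto
    moreover have "card ({\<pi> \<in> LP n. Suc (ex n \<pi>) = 1 \<and> interaction n \<pi> \<in> UNIV} \<union> {\<pi> \<in> LP n. 1 \<le> ex n \<pi> \<and> Suc (interaction n \<pi>) \<in> UNIV})
        = card {\<pi> \<in> LP n. Suc (ex n \<pi>) = 1 \<and> interaction n \<pi> \<in> UNIV} + card {\<pi> \<in> LP n. 1 \<le> ex n \<pi> \<and> Suc (interaction n \<pi>) \<in> UNIV}"
      by (rule card_Un_disjoint) (use LP_finite in auto)
    ultimately show ?thesis by simp
  qed
  then have "card (LP n) = card {\<sigma> \<in> LP (Suc n). ex (Suc n) \<sigma> = 1}" using r by simp
  then have "real (card (LP n)) = Bc (Suc n) 1" using cnt_Bc[of "Suc n" 1] by simp
  then show "real (card (LP n)) = (1 / (real n + 1)) * real ((2*n) choose n)" using Bc_catalan[of n] by simp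
next
  fix k assume k: "1 \<le> k \<and> k \<le> n"
  have "real (card {\<sigma> \<in> LP n. ex n \<sigma> = k}) = Bc n k" using cnt_Bc[OF assms] .
  then show "real (card {\<sigma> \<in> LP n. ex n \<sigma> = k}) = real ((2*n - k) choose n) * real k / real (2*n - k)"
    unfolding Bc_def using k by simp
next
  fix l assume "l \<le> n - 1"
  obtain n' where n': "n = Suc n'" using assms by (cases n) auto
  have range: "ex n \<sigma> \<in> {1..n}" if s: "\<sigma> \<in> LP n" for \<sigma>
  proof -
    have "1 \<le> ex n \<sigma>" using ex_pos[of \<sigma> n'] s n' by simp
    moreover have "ex n \<sigma> \<le> n" using ex_le_from[OF cnt_Fc[OF assms] s] .
    ultimately show ?thesis by simp
  qed
  have "card {\<sigma> \<in> LP n. interaction n \<sigma> = l} = (\<Sum>k\<in>{1..n}. card {\<sigma> \<in> {\<sigma> \<in> LP n. interaction n \<sigma> = l}. ex n \<sigma> = k})"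
    by (rule card_fibers) (use LP_finite range in auto)
  also have "\<dots> = (\<Sum>k\<in>{1..n}. card {\<sigma> \<in> LP n. ex n \<sigma> = k \<and> interaction n \<sigma> = l})"
    by (rule sum.cong[OF refl]) (rule arg_cong[where f=card], auto)
  finally have "real (card {\<sigma> \<in> LP n. interaction n \<sigma> = l}) = (\<Sum>k\<in>{1..n}. Fc n k l)"
    using cnt_Fc[OF assms] by simp
  also have "\<dots> = Fc (n+1) 1 (l+1) - Fc n 0 (l+1)" using Fc_tail[OF assms, of 1 l] by simp
  also have "\<dots> = (1 / real n) * real (n choose (l + 1)) * real (n choose l)"
    using Fc_narayana[OF assms, of l] by (simp add: Fc_zero)
  finally show "real (card {\<sigma> \<in> LP n. interaction n \<sigma> = l}) = (1 / real n) * real (n choose (l + 1)) * real (n choose l)" .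
qed


end
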